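(* Let $f:\mathbb{R}^2\to\mathbb{R}^2$, let $x^*\in\mathbb{R}^2$ with $f(x^* )=0$, and assume $f$ is continuously differentiable on a neighbourhood of $x^*$. Suppose $A=Df(x^* )=V^{-1}\begin{bmatrix}\mu&-\omega\\ \omega&\mu\end{bmatrix}V$ for an invertible $V\in\mathbb{R}^{2\times2}$ and reals $\mu>0$, $\omega\neq0$. Fix $\tau>0$, $\rho\in[0,1)$ and $\theta\in[0,2\pi)$, and put $$\epsilon_1=\frac{\rho\cos(\theta-\omega\tau)-\rho e^{\mu\tau}\cos(\theta-2\omega\tau)-e^{3\mu\tau}\cos(2\omega\tau)+e^{4\mu\tau}\cos(\omega\tau)}{\tau e^{\mu\tau}\big(1-2e^{\mu\tau}\cos(\omega\tau)+e^{2\mu\tau}\big)},$$ $$\epsilon_2=\frac{\rho\sin(\theta-\omega\tau)-\rho e^{\mu\tau}\sin(\theta-2\omega\tau)-e^{3\mu\tau}\sin(2\omega\tau)+e^{4\mu\tau}\sin(\omega\tau)}{\tau e^{\mu\tau}\big(1-2e^{\mu\tau}\cos(\omega\tau)+e^{2\mu\tau}\big)},$$ and $K=V^{-1}\begin{bmatrix}\epsilon_1&-\epsilon_2\\ \epsilon_2&\epsilon_1\end{bmatrix}V$. Then $x^*$ is a locally asymptotically stable equilibrium of the controlled system $$\dot x(t)=f(x(t))+K(t)\big(x(t-2\tau)-x(t-\tau)\big),\quad t\ge0,$$ where $K(t)=0_{2\times2}$ if $3k\tau\le t<(3k+2)\tau$ and $K(t)=K$ if $(3k+2)\tau\le t<(3k+3)\tau$,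 $k=0,1,2,\dots$.
   Context: Since $K(t)=0$ for $t\in[0,2\tau)$, a solution of the controlled system is determined by its initial value $x(0)$. "Locally asymptotically stable" means: for every $\eta>0$ there is $\delta>0$ such that every solution with $\|x(0)-x^*\|<\delta$ is defined for all $t\ge0$ and satisfies $\|x(t)-x^*\|<\eta$ for all $t\ge0$, and there is $\delta_0>0$ such that $\|x(0)-x^*\|<\delta_0$ implies $x(t)\to x^*$ as $t\to\infty$. *)

theory Defs
  imports "HOL-Analysis.Analysis"
begin

definition ctrl_gain :: "real^2^2 \<Rightarrow> real \<Rightarrow> real \<Rightarrow> real^2^2" where
  "ctrl_gain K \<tau> t =
     (if \<exists>k::nat. (3 * real k + 2) * \<tau> \<le> t \<and> t < (3 * real k + 3) * \<tau> then K else 0)"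

text \<open>A solution of x'(t) = f(x(t)) + K(t)(x(t-2tau) - x(t-tau)) on an interval S starting at 0:
  continuous on S with right derivative equal to the right-hand side at every t in S
  (K(t) is right-continuous and piecewise constant).\<close>
definition is_ctrl_solution ::
  "(real^2 \<Rightarrow> real^2) \<Rightarrow> real^2^2 \<Rightarrow> real \<Rightarrow> (real \<Rightarrow> real^2) \<Rightarrow> real set \<Rightarrow> bool" where
  "is_ctrl_solution f K \<tau> x S \<longleftrightarrow>
     continuous_on S x \<and>
     (\<forall>t\<in>S. (x has_vector_derivative
                 (f (x t) + ctrl_gain K \<tau> t *v (x (t - 2 * \<tau>) - x (t - \<tau>))))
               (at t within (S \<inter> {t..})))"

definition loc_asym_stable ::
  "(real^2 \<Rightarrow> real^2) \<Rightarrow> real^2^2 \<Rightarrow> real \<Rightarrow> real^2 \<Rightarrow> bool" where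
  "loc_asym_stable f K \<tau> xs \<longleftrightarrow>
     (\<forall>\<eta>>0. \<exists>\<delta>>0. \<forall>x0. norm (x0 - xs) < \<delta> \<longrightarrow>
        (\<exists>x. is_ctrl_solution f K \<tau> x {0..} \<and> x 0 = x0) \<and>
        (\<forall>T x. T > 0 \<and> is_ctrl_solution f K \<tau> x {0..<T} \<and> x 0 = x0 \<longrightarrow>
                (\<forall>t\<in>{0..<T}. norm (x t - xs) < \<eta>))) \<and>
     (\<exists>\<delta>0>0. \<forall>x. is_ctrl_solution f K \<tau> x {0..} \<and> norm (x 0 - xs) < \<delta>0 \<longrightarrow>
        (x \<longlongrightarrow> xs) at_top)"

end

theory Submission
  imports Defs
begin

lemma real_induct_le:
  fixes \<phi> :: "real \<Rightarrow> real"
  assumes ab: "a \<le> b" and cont: "continuous_on {a..b} \<phi>" and base: "\<phi> a \<le> 0"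
    and step: "\<And>t. t \<in> {a..<b} \<Longrightarrow> \<phi> t \<le> 0 \<Longrightarrow> \<exists>d>0. \<forall>h. 0 < h \<and> h < d \<longrightarrow> \<phi> (t+h) \<le> 0"
  shows "\<forall>t\<in>{a..b}. \<phi> t \<le> 0"
proof -
  define S where "S = {t\<in>{a..b}. \<forall>s\<in>{a..t}. \<phi> s \<le> 0}"
  define s where "s = Sup S"
  have aS: "a \<in> S" using base ab by (auto simp: S_def)
  have bdd: "bdd_above S" by (auto simp: S_def bdd_above_def)
  have as: "a \<le> s" unfolding s_def using aS bdd by (rule cSup_upper)
  have sb: "s \<le> b" unfolding s_def using aS by (intro cSup_least) (auto simp: S_def)
  have below: "\<phi> t \<le> 0" if "a \<le> t" "t < s" for t
  proof -
    obtain x where "x \<in> S" "t < x" using \<open>t < s\<close> unfolding s_def using less_cSup_iff[OF _ bdd] aS by blast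
    then show ?thesis using that by (auto simp: S_def)
  qed
  have phis: "\<phi> s \<le> 0"
  proof (rule ccontr)
    assume neg: "\<not> \<phi> s \<le> 0"
    then have "s \<noteq> a" using base by auto
    then have "a < s" using as by auto
    have "s \<in> {a..b}" using as sb by auto
    then obtain d where d: "d > 0" "\<forall>y\<in>{a..b}. dist y s < d \<longrightarrow> dist (\<phi> y) (\<phi> s) < \<phi> s"
      using cont neg unfolding continuous_on_iff by (meson not_le)
    define y where "y = max a (s - d/2)"
    have "y \<in> {a..b}" "dist y s < d" "a \<le> y" "y < s" using d \<open>a < s\<close> sb by (auto simp: y_def dist_real_def)
    then have "dist (\<phi> y) (\<phi> s) < \<phi> s" "\<phi> y \<le> 0" using d below by auto
    then show False by (auto simp: dist_real_def)
  qed
  have sS: "\<forall>x\<in>{a..s}. \<phi> x \<le> 0" using below phis by (metis atLeastAtMost_iff order_le_less)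
  have "s = b"
  proof (rule ccontr)
    assume "s \<noteq> b"
    then have "s \<in> {a..<b}" using as sb by auto
    then obtain d where d: "d > 0" "\<forall>h. 0 < h \<and> h < d \<longrightarrow> \<phi> (s+h) \<le> 0" using step phis by blast
    define s' where "s' = min b (s + d/2)"
    have "s < s'" using d \<open>s \<noteq> b\<close> sb by (auto simp: s'_def)
    have "s' \<in> S"
      unfolding S_def
    proof (intro CollectI conjI ballI)
      show "s' \<in> {a..b}" using \<open>s < s'\<close> as by (auto simp: s'_def)
      fix x assume x: "x \<in> {a..s'}"
      show "\<phi> x \<le> 0"
      proof (cases "x \<le> s")
        case True then show ?thesis using sS x by auto
      next
        case False
        then have "\<phi> (s + (x - s)) \<le> 0" using d x by (intro d(2)[rule_format]) (auto simp: s'_def)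
        then show ?thesis by simp
      qed
    qed
    then have "s' \<le> s" unfolding s_def using bdd by (rule cSup_upper)
    then show False using \<open>s < s'\<close> by auto
  qed
  then show ?thesis using sS by auto
qed

lemma le_eps_lemma:
  fixes x y E s0 :: real
  assumes "E > 0" "s0 > 0" "\<And>s. 0 < s \<Longrightarrow> s < s0 \<Longrightarrow> x \<le> y + s * E"
  shows "x \<le> y"
proof (rule ccontr)
  assume "\<not> x \<le> y"
  define s where "s = min (s0/2) ((x - y) / (2*E))"
  have "0 < s" "s < s0" using assms \<open>\<not> x \<le> y\<close> by (auto simp: s_def)
  then have "x \<le> y + s * E" using assms by auto
  moreover have "s * E \<le> (x - y)/2" using assms \<open>\<not> x \<le> y\<close>
    by (auto simp: s_def min_def field_simps)
  ultimately show False using \<open>\<not> x \<le> y\<close> by auto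
qed

lemma gronwall_cmp:
  fixes v :: "real \<Rightarrow> 'a::real_normed_vector"
  assumes ab: "a \<le> b" and cont: "continuous_on {a..b} v"
    and der: "\<And>t. t \<in> {a..<b} \<Longrightarrow> (v has_vector_derivative v' t) (at t within {t..b})"
    and p: "p > 0" and q: "q \<ge> 0" and c: "norm (v a) \<le> c"
    and sig: "\<sigma> > 0"
    and bnd: "\<And>t. t \<in> {a..<b} \<Longrightarrow> norm (v t) < (c + q*(t-a)) * exp(2*p*(t-a)) + \<sigma>
                 \<Longrightarrow> norm (v' t) \<le> p * norm (v t) + q"
    and t: "t \<in> {a..b}"
  shows "norm (v t) \<le> (c + q*(t-a)) * exp(2*p*(t-a))"
proof -
  define E where "E = exp (2*p*(b-a))"
  have E: "E > 0" by (simp add: E_def)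
  have c0: "c \<ge> 0" using c norm_ge_zero order_trans by blast
  have main: "norm (v t) \<le> (c + q*(t-a)) * exp(2*p*(t-a)) + s * E"
    if s: "0 < s" "s < \<sigma> / E" for s
  proof -
    define \<beta> where "\<beta> t = (c + q*(t-a) + s) * exp(2*p*(t-a))" for t
    have sE: "s * E < \<sigma>" using s E by (simp add: field_simps)
    have "\<forall>t\<in>{a..b}. norm (v t) - \<beta> t \<le> 0"
    proof (rule real_induct_le[OF ab])
      show "continuous_on {a..b} (\<lambda>t. norm (v t) - \<beta> t)"
        unfolding \<beta>_def by (intro continuous_intros cont)
      show "norm (v a) - \<beta> a \<le> 0" using c s by (simp add: \<beta>_def)
      fix t assume t: "t \<in> {a..<b}" and le: "norm (v t) - \<beta> t \<le> 0"
      define e where "e = exp(2*p*(t-a))"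
      have e1: "e \<ge> 1" using t p by (simp add: e_def)
      have eE: "e \<le> E" using t p by (simp add: e_def E_def)
      have \<beta>t: "\<beta> t = (c + q*(t-a) + s) * e" by (simp add: \<beta>_def e_def)
      have "norm (v t) < (c + q*(t-a)) * e + \<sigma>"
      proof -
        have "s * e \<le> s * E" using eE s by simp
        then show ?thesis using le sE \<beta>t by (simp add: algebra_simps)
      qed
      then have dv: "norm (v' t) \<le> p * norm (v t) + q" using bnd t by (simp add: e_def)
      define \<beta>' where "\<beta>' = q * e + 2*p*\<beta> t"
      have d\<beta>: "(\<beta> has_real_derivative \<beta>') (at t within {t..b})"
        unfolding \<beta>_def \<beta>'_def e_def
        by (auto intro!: derivative_eq_intros simp: algebra_simps)
      have \<beta>s: "\<beta> t \<ge> s"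
      proof -
        have "q*(t-a) \<ge> 0" using q t by simp
        then have X: "c + q*(t-a) + s \<ge> s" using c0 by linarith
        have "(c + q*(t-a) + s) * 1 \<le> (c + q*(t-a) + s) * e" using e1 X s by (intro mult_left_mono) auto
        then show ?thesis using X \<beta>t by simp
      qed
      define \<gamma> where "\<gamma> = \<beta>' - (p * \<beta> t + q)"
      have \<gamma>: "\<gamma> \<ge> p * s"
      proof -
        have "q * e \<ge> q" using e1 q by (simp add: mult_le_cancel_left1)
        moreover have "p * s \<le> p * \<beta> t" using \<beta>s p by (simp add: mult_left_mono)
        ultimately show ?thesis by (simp add: \<gamma>_def \<beta>'_def)
      qed
      have \<gamma>0: "\<gamma> > 0" using \<gamma> mult_pos_pos[OF p s(1)] by linarith
      have \<gamma>3: "\<gamma>/3 > 0" using \<gamma>0 by simp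
      obtain d1 where d1: "d1 > 0" "\<forall>y\<in>{t..b}. norm (y - t) < d1 \<longrightarrow>
          norm (v y - v t - (y - t) *\<^sub>R v' t) \<le> \<gamma>/3 * norm (y - t)"
        using der[OF t, unfolded has_vector_derivative_def has_derivative_within_alt] \<gamma>3 by blast
      obtain d2 where d2: "d2 > 0" "\<forall>y\<in>{t..b}. norm (y - t) < d2 \<longrightarrow>
          norm (\<beta> y - \<beta> t - (y - t) *\<^sub>R \<beta>') \<le> \<gamma>/3 * norm (y - t)"
        using d\<beta>[unfolded has_real_derivative_iff_has_vector_derivative has_vector_derivative_def has_derivative_within_alt] \<gamma>3 by blast
      show "\<exists>d>0. \<forall>h. 0 < h \<and> h < d \<longrightarrow> norm (v (t+h)) - \<beta> (t+h) \<le> 0"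
      proof (intro exI[of _ "min (b - t) (min d1 d2)"] conjI allI impI)
        show "0 < min (b - t) (min d1 d2)" using t d1 d2 by auto
        fix h assume h: "0 < h \<and> h < min (b - t) (min d1 d2)"
        have y: "t + h \<in> {t..b}" "norm (t + h - t) < d1" "norm (t + h - t) < d2" using h by auto
        have 1: "norm (v (t+h) - v t - h *\<^sub>R v' t) \<le> \<gamma>/3 * h" using d1(2)[rule_format, OF y(1,2)] h by simp
        have 2: "norm (\<beta> (t+h) - \<beta> t - h * \<beta>') \<le> \<gamma>/3 * h" using d2(2)[rule_format, OF y(1,3)] h by simp
        have n1: "norm (v (t+h)) \<le> norm (v t) + norm (v (t+h) - v t)" by (rule norm_triangle_sub)
        have n2: "norm (v (t+h) - v t) \<le> norm (h *\<^sub>R v' t) + norm (v (t+h) - v t - h *\<^sub>R v' t)" by (rule norm_triangle_sub)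
        have "norm (v (t+h)) \<le> norm (v t) + norm (h *\<^sub>R v' t) + \<gamma>/3 * h"
          using 1 n1 n2 by linarith
        also have "norm (h *\<^sub>R v' t) = h * norm (v' t)" using h by simp
        also have "h * norm (v' t) \<le> h * (p * \<beta> t + q)"
          using dv le p h by (intro mult_left_mono) (auto intro: order_trans)
        finally have "norm (v (t+h)) \<le> \<beta> t + h * (p * \<beta> t + q) + \<gamma>/3 * h"
          using le by linarith
        moreover have "\<beta> (t+h) \<ge> \<beta> t + h * \<beta>' - \<gamma>/3 * h" using abs_le_D2[OF 2[unfolded real_norm_def]] by linarith
        moreover have "h * \<beta>' = h * (p * \<beta> t + q) + h * \<gamma>" by (simp add: \<gamma>_def algebra_simps)
        moreover have "h * \<gamma> > 0" using h \<gamma>0 by simp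
        moreover have "\<gamma>/3 * h = (h * \<gamma>)/3" by simp
        ultimately show "norm (v (t+h)) - \<beta> (t+h) \<le> 0" by linarith
      qed
    qed
    then have "norm (v t) \<le> \<beta> t" using t by auto
    also have "\<beta> t \<le> (c + q*(t-a)) * exp(2*p*(t-a)) + s * E"
      using s t p by (auto simp: \<beta>_def E_def algebra_simps)
    finally show ?thesis .
  qed
  show ?thesis
    by (rule le_eps_lemma[OF E _ main]) (use sig E in auto)
qed

lemma lipschitz_cont:
  fixes F :: "'a::real_normed_vector \<Rightarrow> 'b::real_normed_vector"
  assumes L: "L > 0" "\<And>z w. norm (F z - F w) \<le> L * norm (z - w)"
  shows "continuous_on S F"
  unfolding continuous_on_iff
proof (intro ballI allI impI)
  fix x e assume "x \<in> S" "(e::real) > 0"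
  show "\<exists>d>0. \<forall>x'\<in>S. dist x' x < d \<longrightarrow> dist (F x') (F x) < e"
  proof (intro exI[of _ "e / L"] conjI ballI impI)
    show "e / L > 0" using L \<open>e > 0\<close> by simp
    fix y assume "y \<in> S" "dist y x < e / L"
    then have "L * dist y x < e" using L by (simp add: field_simps)
    then show "dist (F y) (F x) < e" using L(2)[of y x] by (simp add: dist_norm)
  qed
qed

lemma poly_integral:
  fixes a t :: real and n :: nat
  assumes "a \<le> t"
  shows "((\<lambda>s. C * (s - a)^n / fact n) has_integral (C * (t - a)^(Suc n) / fact (Suc n))) {a..t}"
proof -
  have "((\<lambda>s. C * (s - a)^n / fact n) has_integral
          ((\<lambda>s. C * (s - a)^(Suc n) / fact (Suc n)) t - (\<lambda>s. C * (s - a)^(Suc n) / fact (Suc n)) a)) {a..t}"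
  proof (rule fundamental_theorem_of_calculus[OF assms])
    fix x assume "x \<in> {a..t}"
    have "((\<lambda>s. (s - a)^(Suc n)) has_real_derivative ((1 + of_nat n) * (1 * (x - a)^n))) (at x within {a..t})"
      by (intro DERIV_power_Suc derivative_eq_intros) auto
    then have "((\<lambda>s. C * (s - a)^(Suc n) / fact (Suc n)) has_real_derivative
            (C * ((1 + of_nat n) * (1 * (x - a)^n)) / fact (Suc n))) (at x within {a..t})"
      by (intro DERIV_cdivide DERIV_cmult)
    moreover have "C * ((1 + of_nat n) * (1 * (x - a)^n)) / fact (Suc n) = C * (x - a)^n / fact n"
    proof -
      have f: "(fact (Suc n)::real) = (1 + real n) * fact n" by (simp add: fact_Suc)
      have "(1 + real n) > 0" "(fact n :: real) > 0" by auto
      have "C * ((1 + real n) * (1 * (x - a)^n)) / fact (Suc n) = ((1 + real n) * (C * (x - a)^n)) / ((1 + real n) * fact n)"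
        unfolding f by (simp add: algebra_simps)
      also have "\<dots> = C * (x - a)^n / fact n" using \<open>(1 + real n) > 0\<close> by (intro nonzero_mult_divide_mult_cancel_left) simp
      finally show ?thesis .
    qed
    ultimately show "((\<lambda>s. C * (s - a)^(Suc n) / fact (Suc n)) has_vector_derivative
            (C * (x - a)^n / fact n)) (at x within {a..t})"
      by (simp add: has_real_derivative_iff_has_vector_derivative)
  qed
  then show ?thesis by simp
qed

lemma picard_exists:
  fixes F :: "'a::banach \<Rightarrow> 'a" and h :: "real \<Rightarrow> 'a"
  assumes L: "L > 0" "\<And>z w. norm (F z - F w) \<le> L * norm (z - w)"
    and hc: "continuous_on {a..b} h" and ab: "a \<le> b"
  shows "\<exists>v. continuous_on {a..b} v \<and> v a = v0 \<and>
           (\<forall>t\<in>{a..b}. (v has_vector_derivative (F (v t) + h t)) (at t within {a..b}))"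
proof -
  have Fc: "continuous_on S F" for S using lipschitz_cont[OF L] .
  define \<phi> where "\<phi> = rec_nat (\<lambda>t. v0) (\<lambda>n \<psi> t. v0 + integral {a..t} (\<lambda>s. F (\<psi> s) + h s))"
  have \<phi>0: "\<phi> 0 = (\<lambda>t. v0)" by (simp add: \<phi>_def)
  have \<phi>S: "\<phi> (Suc n) = (\<lambda>t. v0 + integral {a..t} (\<lambda>s. F (\<phi> n s) + h s))" for n by (simp add: \<phi>_def)
  have intc: "continuous_on {a..b} (\<lambda>t. integral {a..t} g)" if "continuous_on {a..b} g" for g :: "real \<Rightarrow> 'a"
    by (rule continuous_on_vector_derivative[OF integral_has_vector_derivative[OF that]])
  have cont: "continuous_on {a..b} (\<phi> n)" for n
  proof (induction n)
    case 0 then show ?case by (simp add: \<phi>0)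
  next
    case (Suc n)
    have "continuous_on {a..b} (\<lambda>s. F (\<phi> n s))"
      by (rule continuous_on_compose2[OF Fc Suc.IH]) auto
    then have "continuous_on {a..b} (\<lambda>s. F (\<phi> n s) + h s)"
      by (intro continuous_intros hc)
    then show ?case unfolding \<phi>S by (rule continuous_on_add[OF continuous_on_const intc])
  qed
  have integ: "(\<lambda>s. F (\<phi> n s) + h s) integrable_on {a..t}" if "t \<in> {a..b}" for n t
  proof -
    have "continuous_on {a..b} (\<lambda>s. F (\<phi> n s))"
      by (rule continuous_on_compose2[OF Fc cont[of n]]) auto
    then have "continuous_on {a..b} (\<lambda>s. F (\<phi> n s) + h s)"
      by (intro continuous_intros hc)
    then have "continuous_on {a..t} (\<lambda>s. F (\<phi> n s) + h s)" by (rule continuous_on_subset) (use that in auto)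
    then show ?thesis by (rule integrable_continuous_real)
  qed
  obtain M where M: "M > 0" "\<And>t. t \<in> {a..b} \<Longrightarrow> norm (\<phi> 1 t - \<phi> 0 t) \<le> M"
  proof -
    have "compact ((\<lambda>t. \<phi> 1 t - \<phi> 0 t) ` {a..b})"
      by (intro compact_continuous_image continuous_intros cont) auto
    then obtain M where "M > 0" "\<forall>x\<in>(\<lambda>t. \<phi> 1 t - \<phi> 0 t) ` {a..b}. norm x \<le> M"
      using compact_imp_bounded bounded_pos by metis
    then show ?thesis using that by auto
  qed
  have diff: "norm (\<phi> (Suc n) t - \<phi> n t) \<le> M * (L * (t - a))^n / fact n" if "t \<in> {a..b}" for n t
    using that
  proof (induction n arbitrary: t)
    case 0 then show ?case using M by simp
  next
    case (Suc n)
    have "\<phi> (Suc (Suc n)) t - \<phi> (Suc n) t =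
        integral {a..t} (\<lambda>s. F (\<phi> (Suc n) s) + h s) - integral {a..t} (\<lambda>s. F (\<phi> n s) + h s)"
      by (simp add: \<phi>S)
    also have "\<dots> = integral {a..t} (\<lambda>s. (F (\<phi> (Suc n) s) + h s) - (F (\<phi> n s) + h s))"
      by (rule Henstock_Kurzweil_Integration.integral_diff[symmetric]) (use integ Suc.prems in auto)
    finally have eq: "\<phi> (Suc (Suc n)) t - \<phi> (Suc n) t = integral {a..t} (\<lambda>s. (F (\<phi> (Suc n) s) + h s) - (F (\<phi> n s) + h s))" .
    have pi: "((\<lambda>s. (L * M * L^n) * (s - a)^n / fact n) has_integral ((L * M * L^n) * (t - a)^(Suc n) / fact (Suc n))) {a..t}"
      by (rule poly_integral) (use Suc.prems in auto)
    have "norm (integral {a..t} (\<lambda>s. (F (\<phi> (Suc n) s) + h s) - (F (\<phi> n s) + h s)))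
        \<le> integral {a..t} (\<lambda>s. (L * M * L^n) * (s - a)^n / fact n)"
    proof (rule integral_norm_bound_integral)
      show "(\<lambda>s. F (\<phi> (Suc n) s) + h s - (F (\<phi> n s) + h s)) integrable_on {a..t}"
        by (intro integrable_diff integ) (use Suc.prems in auto)
      show "(\<lambda>s. L * M * L ^ n * (s - a) ^ n / fact n) integrable_on {a..t}"
        using pi by blast
      fix s assume s: "s \<in> {a..t}"
      then have sab: "s \<in> {a..b}" using Suc.prems by auto
      have "norm (F (\<phi> (Suc n) s) + h s - (F (\<phi> n s) + h s)) = norm (F (\<phi> (Suc n) s) - F (\<phi> n s))" by simp
      also have "\<dots> \<le> L * norm (\<phi> (Suc n) s - \<phi> n s)" by (rule L(2))
      also have "\<dots> \<le> L * (M * (L * (s - a))^n / fact n)" by (rule mult_left_mono[OF Suc.IH[OF sab]]) (use L in simp)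
      also have "\<dots> = L * M * L ^ n * (s - a) ^ n / fact n" by (simp add: power_mult_distrib)
      finally show "norm (F (\<phi> (Suc n) s) + h s - (F (\<phi> n s) + h s)) \<le> L * M * L ^ n * (s - a) ^ n / fact n" .
    qed
    also have "\<dots> = (L * M * L^n) * (t - a)^(Suc n) / fact (Suc n)" using pi by (rule integral_unique)
    also have "\<dots> = M * (L * (t - a)) ^ Suc n / fact (Suc n)" by (simp add: power_mult_distrib)
    finally show ?case using eq by simp
  qed
  define Mn where "Mn n = M * (L * (b - a))^n / fact n" for n
  have summ: "summable Mn"
  proof -
    have "summable (\<lambda>n. M * (inverse (fact n) * (L * (b - a))^n))"
      by (intro summable_mult summable_exp)
    moreover have "(\<lambda>n. M * (inverse (fact n) * (L * (b - a))^n)) = Mn"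
      by (intro ext) (simp add: Mn_def field_simps)
    ultimately show ?thesis by simp
  qed
  have bnd: "norm (\<phi> (Suc n) t - \<phi> n t) \<le> Mn n" if "t \<in> {a..b}" for n t
  proof -
    have "(L * (t - a))^n \<le> (L * (b - a))^n" using that L by (intro power_mono mult_left_mono) auto
    then have "M * (L * (t - a))^n / fact n \<le> M * (L * (b - a))^n / fact n"
      using M by (intro divide_right_mono mult_left_mono) auto
    then show ?thesis using diff[OF that, of n] by (simp add: Mn_def)
  qed
  have ul0: "uniform_limit {a..b} (\<lambda>n t. \<Sum>i<n. \<phi> (Suc i) t - \<phi> i t) (\<lambda>t. \<Sum>i. \<phi> (Suc i) t - \<phi> i t) sequentially"
    by (rule Weierstrass_m_test[OF bnd summ])
  define \<psi> where "\<psi> t = v0 + (\<Sum>i. \<phi> (Suc i) t - \<phi> i t)" for t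
  have ul: "uniform_limit {a..b} \<phi> \<psi> sequentially"
  proof -
    have "uniform_limit {a..b} (\<lambda>n t. v0 + (\<Sum>i<n. \<phi> (Suc i) t - \<phi> i t)) \<psi> sequentially"
      unfolding \<psi>_def by (intro uniform_limit_intros ul0)
    moreover have "(\<lambda>n t. v0 + (\<Sum>i<n. \<phi> (Suc i) t - \<phi> i t)) = \<phi>"
    proof (intro ext)
      fix n t show "v0 + (\<Sum>i<n. \<phi> (Suc i) t - \<phi> i t) = \<phi> n t"
        using sum_lessThan_telescope[of "\<lambda>i. \<phi> i t" n] by (simp add: \<phi>0)
    qed
    ultimately show ?thesis by simp
  qed
  have \<psi>c: "continuous_on {a..b} \<psi>"
    by (rule uniform_limit_theorem[OF _ ul]) (auto simp: cont)
  have "continuous_on {a..b} (\<lambda>s. F (\<psi> s))"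
    by (rule continuous_on_compose2[OF Fc \<psi>c]) auto
  then have Fpc: "continuous_on {a..b} (\<lambda>s. F (\<psi> s) + h s)"
    by (intro continuous_intros hc)
  have eqn: "\<psi> t = v0 + integral {a..t} (\<lambda>s. F (\<psi> s) + h s)" if t: "t \<in> {a..b}" for t
  proof -
    have l1: "(\<lambda>n. \<phi> (Suc n) t) \<longlonglongrightarrow> \<psi> t"
      using tendsto_uniform_limitI[OF ul t] by (rule LIMSEQ_Suc)
    have intpsi: "(\<lambda>s. F (\<psi> s) + h s) integrable_on {a..t}"
      by (rule integrable_continuous_real, rule continuous_on_subset[OF Fpc]) (use t in auto)
    have l2: "(\<lambda>n. \<phi> (Suc n) t) \<longlonglongrightarrow> v0 + integral {a..t} (\<lambda>s. F (\<psi> s) + h s)"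
    proof (rule tendstoI)
      fix e :: real assume e: "e > 0"
      define e' where "e' = e / (L * (b - a) + 1)"
      have "L * (b - a) \<ge> 0" using L ab by simp
      then have e': "e' > 0" using e by (simp add: e'_def)
      have ev: "\<forall>\<^sub>F n in sequentially. \<forall>x\<in>{a..b}. dist (\<phi> n x) (\<psi> x) < e'"
        using uniform_limitD[OF ul e'] .
      show "\<forall>\<^sub>F n in sequentially. dist (\<phi> (Suc n) t) (v0 + integral {a..t} (\<lambda>s. F (\<psi> s) + h s)) < e"
        using ev
      proof eventually_elim
        case (elim n)
        have "dist (\<phi> (Suc n) t) (v0 + integral {a..t} (\<lambda>s. F (\<psi> s) + h s))
            = norm (integral {a..t} (\<lambda>s. F (\<phi> n s) + h s) - integral {a..t} (\<lambda>s. F (\<psi> s) + h s))"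
          by (simp add: \<phi>S dist_norm)
        also have "\<dots> = norm (integral {a..t} (\<lambda>s. (F (\<phi> n s) + h s) - (F (\<psi> s) + h s)))"
          by (subst Henstock_Kurzweil_Integration.integral_diff) (use integ t intpsi in auto)
        also have "\<dots> \<le> integral {a..t} (\<lambda>s. L * e')"
        proof (rule integral_norm_bound_integral)
          show "(\<lambda>s. F (\<phi> n s) + h s - (F (\<psi> s) + h s)) integrable_on {a..t}"
            by (intro integrable_diff integ intpsi) (use t in auto)
          show "(\<lambda>s. L * e') integrable_on {a..t}" by (rule integrable_const_ivl)
          fix s assume s: "s \<in> {a..t}"
          then have "s \<in> {a..b}" using t by auto
          then have "norm (\<phi> n s - \<psi> s) < e'" using elim by (simp add: dist_norm)
          then have "L * norm (\<phi> n s - \<psi> s) \<le> L * e'" using L by simp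
          then show "norm (F (\<phi> n s) + h s - (F (\<psi> s) + h s)) \<le> L * e'"
            using L(2)[of "\<phi> n s" "\<psi> s"] by simp
        qed
        also have "\<dots> = L * e' * (t - a)" using t by simp
        also have "\<dots> \<le> L * e' * (b - a)" using t L e' by (intro mult_left_mono) auto
        also have "\<dots> < e"
        proof -
          have "L * (b - a) < L * (b - a) + 1" by simp
          then have "L * (b - a) * e' < (L * (b - a) + 1) * e'" using e' by (intro mult_strict_right_mono) auto
          also have "(L * (b - a) + 1) * e' = e" using \<open>L * (b - a) \<ge> 0\<close> by (simp add: e'_def)
          finally show ?thesis by (simp add: algebra_simps)
        qed
        finally show ?case .
      qed
    qed
    show ?thesis using LIMSEQ_unique[OF l1 l2] .
  qed
  show ?thesis
  proof (intro exI[of _ \<psi>] conjI ballI)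
    show "continuous_on {a..b} \<psi>" by (rule \<psi>c)
    show "\<psi> a = v0" using eqn[of a] ab by simp
    fix t assume t: "t \<in> {a..b}"
    have "((\<lambda>t. v0 + integral {a..t} (\<lambda>s. F (\<psi> s) + h s)) has_vector_derivative (0 + (F (\<psi> t) + h t))) (at t within {a..b})"
      by (intro derivative_intros integral_has_vector_derivative[OF Fpc t])
    then have d: "((\<lambda>t. v0 + integral {a..t} (\<lambda>s. F (\<psi> s) + h s)) has_vector_derivative (F (\<psi> t) + h t)) (at t within {a..b})"
      by simp
    show "(\<psi> has_vector_derivative F (\<psi> t) + h t) (at t within {a..b})"
      by (rule has_vector_derivative_transform[OF t _ d]) (use eqn in auto)
  qed
qed

definition cE :: "complex \<Rightarrow> real \<Rightarrow> complex" where
  "cE c x = exp (complex_of_real x * c)"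

lemma cE_add: "cE c x * cE c y = cE c (x + y)"
  unfolding cE_def by (simp add: exp_add[symmetric] distrib_right)

lemma cE_0[simp]: "cE c 0 = 1" by (simp add: cE_def)

lemma norm_cE: "norm (cE c x) = exp (x * Re c)" by (simp add: cE_def)

lemma cE_inv: "cE c x * cE c (-x) = 1" by (simp add: cE_add)

lemma cE_deriv:
  "((\<lambda>t. cE c (\<alpha> + \<beta> * t)) has_vector_derivative (of_real \<beta> * c * cE c (\<alpha> + \<beta> * t))) (at t within S)"
proof -
  have "((\<lambda>z. exp ((of_real \<alpha> + of_real \<beta> * z) * c)) has_field_derivative
          (exp ((of_real \<alpha> + of_real \<beta> * of_real t) * c) * (of_real \<beta> * c))) (at (of_real t))"
    by (auto intro!: derivative_eq_intros)
  from has_vector_derivative_real_field[OF this]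
  show ?thesis by (simp add: cE_def algebra_simps)
qed

definition kap :: "complex \<Rightarrow> real \<Rightarrow> real \<Rightarrow> complex" where
  "kap \<epsilon> \<tau> t = (if \<exists>k::nat. (3 * real k + 2) * \<tau> \<le> t \<and> t < (3 * real k + 3) * \<tau> then \<epsilon> else 0)"

definition csol :: "(complex \<Rightarrow> complex) \<Rightarrow> complex \<Rightarrow> real \<Rightarrow> (real \<Rightarrow> complex) \<Rightarrow> real set \<Rightarrow> bool" where
  "csol F \<epsilon> \<tau> u S \<longleftrightarrow> continuous_on S u \<and>
     (\<forall>t\<in>S. (u has_vector_derivative (F (u t) + kap \<epsilon> \<tau> t * (u (t - 2*\<tau>) - u (t - \<tau>)))) (at t within S \<inter> {t..}))"

lemma kap_zero:
  assumes "\<tau> > 0" "3 * real k * \<tau> \<le> t" "t < 3 * real k * \<tau> + 2 * \<tau>"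
  shows "kap \<epsilon> \<tau> t = 0"
proof -
  have False if j: "(3 * real j + 2) * \<tau> \<le> t" "t < (3 * real j + 3) * \<tau>" for j
  proof -
    have e: "(3 * real k + 2) * \<tau> = 3 * real k * \<tau> + 2 * \<tau>" by (simp add: distrib_right)
    have "(3 * real j + 2) * \<tau> < (3 * real k + 2) * \<tau>" using j(1) assms(3) e by linarith
    then have "3 * real j + 2 < 3 * real k + 2" using assms(1) by (simp add: mult_less_cancel_right)
    then have "real j < real k" by linarith
    then have "j < k" by simp
    then have "real j + 1 \<le> real k" by (metis Suc_leI of_nat_Suc of_nat_le_iff add.commute)
    then have "(3 * real j + 3) * \<tau> \<le> (3 * real k) * \<tau>" using assms(1) by (intro mult_right_mono) auto
    then show False using j assms by linarith
  qed
  then show ?thesis unfolding kap_def by auto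
qed

lemma kap_eps:
  assumes "3 * real k * \<tau> + 2 * \<tau> \<le> t" "t < 3 * real k * \<tau> + 3 * \<tau>"
  shows "kap \<epsilon> \<tau> t = \<epsilon>"
  unfolding kap_def using assms by (auto intro!: exI[of _ k] simp: algebra_simps)

lemma cE_deriv_m:
  "((\<lambda>t. cE c (\<alpha> - t)) has_vector_derivative (- c * cE c (\<alpha> - t))) (at t within S)"
  using cE_deriv[of c \<alpha> "-1" t S] by simp

lemma cE_cont_m: "continuous_on S (\<lambda>t. cE c (\<alpha> - t))"
  by (rule continuous_on_vector_derivative[OF cE_deriv_m])

lemma ofreal_deriv:
  "((\<lambda>t. complex_of_real (t - b)) has_vector_derivative 1) (at t within S)"
proof -
  have "((\<lambda>t. t - b) has_real_derivative 1) (at t within S)" by (auto intro!: derivative_eq_intros)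
  from has_vector_derivative_of_real[OF this] show ?thesis by simp
qed

definition "dd_c \<tau> lam = cE lam (-2*\<tau>) - cE lam (-\<tau>)"
definition "nd_c \<tau> lam eps = norm eps * \<tau> * norm (dd_c \<tau> lam)"
definition "D1_c \<tau> = 2*\<tau>*exp(4*\<tau>)"
definition "D2_c \<tau> lam eps = (D1_c \<tau> + \<tau>*(1 + nd_c \<tau> lam eps + 2*norm eps*D1_c \<tau>)) * exp(2*\<tau>)"
definition "Cb_c \<tau> lam eps = exp(3*\<tau>*Re lam) * (1 + nd_c \<tau> lam eps + D1_c \<tau> + D2_c \<tau> lam eps)"
definition "mm_c \<tau> lam eps = cE lam (3*\<tau>) + eps * of_real \<tau> * (cE lam \<tau> - cE lam (2*\<tau>))"

locale core =
  fixes \<tau> :: real and lam eps :: complex and F :: "complex \<Rightarrow> complex" and \<eta> r :: real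
  assumes tau: "\<tau> > 0" and mu: "Re lam > 0" and eta: "0 < \<eta>" "\<eta> \<le> 1" and rpos: "r > 0"
    and region: "\<And>z. norm z \<le> r \<Longrightarrow> norm (F z - lam * z) \<le> \<eta> * norm z"
begin

abbreviation "dd \<equiv> dd_c \<tau> lam"
abbreviation "nd \<equiv> nd_c \<tau> lam eps"
abbreviation "D1 \<equiv> D1_c \<tau>"
abbreviation "D2 \<equiv> D2_c \<tau> lam eps"
abbreviation "Cb \<equiv> Cb_c \<tau> lam eps"
abbreviation "mm \<equiv> mm_c \<tau> lam eps"
lemmas dd_def = dd_c_def[of \<tau> lam]
lemmas nd_def = nd_c_def[of \<tau> lam eps]
lemmas D1_def = D1_c_def[of \<tau>]
lemmas D2_def = D2_c_def[of \<tau> lam eps]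
lemmas Cb_def = Cb_c_def[of \<tau> lam eps]
lemmas mm_def = mm_c_def[of \<tau> lam eps]

lemma nd_nn: "nd \<ge> 0" using tau by (simp add: nd_def)
lemma D1_pos: "D1 > 0" using tau by (simp add: D1_def)
lemma D2_pos: "D2 > 0" using tau D1_pos nd_nn by (simp add: D2_def add_pos_nonneg)
lemma Cb_pos: "Cb > 0" using D1_pos D2_pos nd_nn by (simp add: Cb_def add_pos_nonneg)

lemma exp_le3: "0 \<le> x \<Longrightarrow> x \<le> 3*\<tau> \<Longrightarrow> exp (x * Re lam) \<le> exp (3*\<tau>*Re lam)"
  using mu by (simp add: mult_right_mono)

lemma exp_neg_le1: "0 \<le> x \<Longrightarrow> exp (- x * Re lam) \<le> 1"
  using mu by simp

lemma period:
  assumes sol: "csol F eps \<tau> u S" and Sint: "\<And>t. t \<in> S \<Longrightarrow> {0..t} \<subseteq> S"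
    and s0: "s0 = 3 * real k * \<tau>" and t1: "t1 \<in> S" "s0 \<le> t1" "t1 \<le> s0 + 3*\<tau>"
    and small: "norm (u s0) \<le> r / (2*Cb)"
  shows "(\<forall>t\<in>{s0..t1}. norm (u t) \<le> Cb * norm (u s0)) \<and>
         (t1 = s0 + 3*\<tau> \<longrightarrow> norm (u t1 - mm * u s0) \<le> exp(3*\<tau>*Re lam) * \<eta> * D2 * norm (u s0))"
proof -
  define a where "a = u s0"
  define \<mu> where "\<mu> = Re lam"
  define \<sigma> where "\<sigma> = r / (2 * exp(3*\<tau>*\<mu>))"
  have \<sigma>: "\<sigma> > 0" using rpos by (simp add: \<sigma>_def)
  have e\<sigma>: "exp(3*\<tau>*\<mu>) * \<sigma> = r/2" by (simp add: \<sigma>_def)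
  have s0pos: "s0 \<ge> 0" using s0 tau by simp
  have sub: "{0..t1} \<subseteq> S" using Sint t1 by auto
  have ucont: "continuous_on {s0..t1} u"
  proof -
    have "{s0..t1} \<subseteq> S" using sub s0pos by auto
    then show ?thesis using sol unfolding csol_def by (auto elim: continuous_on_subset)
  qed
  have uder: "(u has_vector_derivative (F (u t) + kap eps \<tau> t * (u (t-2*\<tau>) - u (t-\<tau>)))) (at t within {t..e})"
    if "t \<in> {s0..<t1}" "t \<le> e" "e \<le> t1" for t e
  proof -
    have "t \<in> S" using that sub s0pos by auto
    then have "(u has_vector_derivative (F (u t) + kap eps \<tau> t * (u (t-2*\<tau>) - u (t-\<tau>)))) (at t within S \<inter> {t..})"
      using sol unfolding csol_def by blast
    moreover have "{t..e} \<subseteq> S \<inter> {t..}" using that sub s0pos by auto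
    ultimately show ?thesis by (rule has_vector_derivative_within_subset)
  qed
  have Cba: "Cb * norm a \<le> r/2" using small Cb_pos by (simp add: a_def field_simps)
  have na: "norm a \<ge> 0" by simp
  define e1 where "e1 = min t1 (s0 + 2*\<tau>)"
  have e1: "s0 \<le> e1" "e1 \<le> t1" "e1 \<le> s0 + 2*\<tau>" using t1 tau by (auto simp: e1_def)
  define g where "g t = cE lam (s0 - t) * u t - a" for t
  have urep1: "u t = cE lam (t - s0) * (g t + a)" for t
  proof -
    have "cE lam (t - s0) * (g t + a) = (cE lam (t - s0) * cE lam (s0 - t)) * u t" by (simp add: g_def)
    also have "\<dots> = u t" by (simp add: cE_add)
    finally show ?thesis by simp
  qed
  have gnorm: "norm (g t + a) = exp ((s0 - t) * \<mu>) * norm (u t)" for t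
    by (simp add: g_def norm_mult norm_cE \<mu>_def)
  have unorm1: "norm (u t) = exp ((t - s0) * \<mu>) * norm (g t + a)" for t
    by (subst urep1) (simp add: norm_mult norm_cE \<mu>_def)
  have gder: "(g has_vector_derivative (cE lam (s0 - t) * (F (u t) - lam * u t))) (at t within {t..e1})"
    if t: "t \<in> {s0..<e1}" for t
  proof -
    have k0: "kap eps \<tau> t = 0" using t e1 s0 tau by (intro kap_zero[of \<tau> k]) auto
    have "(u has_vector_derivative (F (u t))) (at t within {t..e1})"
      using uder[of t e1] t e1 k0 by simp
    from has_vector_derivative_diff[OF has_vector_derivative_mult[OF cE_deriv_m this] has_vector_derivative_const[of a]]
    have "(g has_vector_derivative (cE lam (s0 - t) * F (u t) + - lam * cE lam (s0 - t) * u t - 0)) (at t within {t..e1})"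
      unfolding g_def by simp
    then show ?thesis by (simp add: algebra_simps)
  qed
  have gcont: "continuous_on {s0..e1} g"
    unfolding g_def using ucont e1 by (intro continuous_intros cE_cont_m) (auto elim: continuous_on_subset)
  have g1: "norm (g t) \<le> (0 + \<eta> * norm a * (t - s0)) * exp (2*\<eta>*(t - s0))" if t: "t \<in> {s0..e1}" for t
  proof (rule gronwall_cmp[OF e1(1) gcont gder eta(1) _ _ \<sigma> _ t])
    show "0 \<le> \<eta> * norm a" using eta by simp
    show "norm (g s0) \<le> 0" by (simp add: g_def a_def)
    fix t assume t: "t \<in> {s0..<e1}"
      and lt: "norm (g t) < (0 + \<eta> * norm a * (t - s0)) * exp (2 * \<eta> * (t - s0)) + \<sigma>"
    have x: "0 \<le> t - s0" "t - s0 \<le> 2*\<tau>" using t e1 by auto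
    have B1: "(0 + \<eta> * norm a * (t - s0)) * exp (2 * \<eta> * (t - s0)) \<le> \<eta> * D1 * norm a"
    proof -
      have "\<eta> * (t - s0) \<le> 1 * (2*\<tau>)" using eta x by (intro mult_mono) auto
      then have "exp (2 * \<eta> * (t - s0)) \<le> exp (4*\<tau>)" by simp
      moreover have "t - s0 \<le> 2*\<tau>" using x by simp
      ultimately have "(t - s0) * exp (2 * \<eta> * (t - s0)) \<le> (2*\<tau>) * exp(4*\<tau>)"
        using x by (intro mult_mono) auto
      then have "(\<eta> * norm a) * ((t - s0) * exp (2 * \<eta> * (t - s0))) \<le> (\<eta> * norm a) * ((2*\<tau>) * exp(4*\<tau>))"
        using eta by (intro mult_left_mono) auto
      then show ?thesis by (simp add: D1_def algebra_simps)
    qed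
    have "\<eta> * D1 * norm a \<le> D1 * norm a" using eta D1_pos by (simp add: mult_right_mono)
    then have gt: "norm (g t) \<le> D1 * norm a + \<sigma>" using lt B1 by linarith
    have "norm (u t) \<le> exp (3*\<tau>*\<mu>) * (norm (g t) + norm a)"
    proof -
      have "exp ((t - s0) * \<mu>) \<le> exp (3*\<tau>*\<mu>)" using x exp_le3[of "t - s0"] by (simp add: \<mu>_def)
      moreover have "norm (g t + a) \<le> norm (g t) + norm a" by (rule norm_triangle_ineq)
      ultimately show ?thesis unfolding unorm1 by (intro mult_mono) auto
    qed
    also have "\<dots> \<le> exp (3*\<tau>*\<mu>) * ((1 + D1) * norm a + \<sigma>)"
      using gt by (intro mult_left_mono) (auto simp: algebra_simps)
    also have "\<dots> = exp (3*\<tau>*\<mu>) * (1 + D1) * norm a + r/2" using e\<sigma> by (simp add: algebra_simps)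
    also have "exp (3*\<tau>*\<mu>) * (1 + D1) * norm a \<le> Cb * norm a"
      using nd_nn D2_pos by (intro mult_right_mono) (auto simp: Cb_def \<mu>_def)
    finally have ur: "norm (u t) \<le> r" using Cba by linarith
    have "norm (cE lam (s0 - t) * (F (u t) - lam * u t)) = exp ((s0 - t) * \<mu>) * norm (F (u t) - lam * u t)"
      by (simp add: norm_mult norm_cE \<mu>_def)
    also have "\<dots> \<le> exp ((s0 - t) * \<mu>) * (\<eta> * norm (u t))"
      using region[OF ur] by (intro mult_left_mono) auto
    also have "\<dots> = \<eta> * norm (g t + a)" using gnorm by simp
    also have "\<dots> \<le> \<eta> * (norm (g t) + norm a)" using eta by (intro mult_left_mono norm_triangle_ineq) auto
    finally show "norm (cE lam (s0 - t) * (F (u t) - lam * u t)) \<le> \<eta> * norm (g t) + \<eta> * norm a"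
      by (simp add: algebra_simps)
  qed
  have g1b: "norm (g t) \<le> \<eta> * D1 * norm a" if t: "t \<in> {s0..e1}" for t
  proof -
    have x: "0 \<le> t - s0" "t - s0 \<le> 2*\<tau>" using t e1 by auto
    have "\<eta> * (t - s0) \<le> 1 * (2*\<tau>)" using eta x by (intro mult_mono) auto
    then have "exp (2 * \<eta> * (t - s0)) \<le> exp (4*\<tau>)" by simp
    then have "(t - s0) * exp (2 * \<eta> * (t - s0)) \<le> (2*\<tau>) * exp(4*\<tau>)"
      using x by (intro mult_mono) auto
    then have "(\<eta> * norm a) * ((t - s0) * exp (2 * \<eta> * (t - s0))) \<le> (\<eta> * norm a) * ((2*\<tau>) * exp(4*\<tau>))"
      using eta by (intro mult_left_mono) auto
    then show ?thesis using g1[OF t] by (simp add: D1_def algebra_simps)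
  qed
  have u1: "norm (u t) \<le> Cb * norm a" if t: "t \<in> {s0..e1}" for t
  proof -
    have x: "0 \<le> t - s0" "t - s0 \<le> 3*\<tau>" using t e1 tau by auto
    have "norm (u t) \<le> exp (3*\<tau>*\<mu>) * (norm (g t) + norm a)"
    proof -
      have "exp ((t - s0) * \<mu>) \<le> exp (3*\<tau>*\<mu>)" using x exp_le3[of "t - s0"] by (simp add: \<mu>_def)
      moreover have "norm (g t + a) \<le> norm (g t) + norm a" by (rule norm_triangle_ineq)
      ultimately show ?thesis unfolding unorm1 by (intro mult_mono) auto
    qed
    also have "\<dots> \<le> exp (3*\<tau>*\<mu>) * ((1 + D1) * norm a)"
    proof -
      have "\<eta> * D1 * norm a \<le> D1 * norm a" using eta D1_pos by (simp add: mult_right_mono)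
      then show ?thesis using g1b[OF t] by (intro mult_left_mono) (auto simp: algebra_simps)
    qed
    also have "\<dots> \<le> Cb * norm a"
      using nd_nn D2_pos by (auto simp: Cb_def \<mu>_def intro!: mult_right_mono)
    finally show ?thesis .
  qed
  show ?thesis
  proof (cases "t1 \<le> s0 + 2*\<tau>")
    case True
    then have "e1 = t1" by (simp add: e1_def)
    then show ?thesis using u1 tau True by (auto simp: a_def)
  next
    case False
    define b2 where "b2 = s0 + 2*\<tau>"
    have e1b: "e1 = b2" using False by (simp add: e1_def b2_def)
    have b2: "b2 \<le> t1" "s0 \<le> b2" using False tau by (auto simp: b2_def)
    define h where "h t = cE lam (s0 - t) * u t - a - eps * of_real (t - b2) * dd * a" for t
    have urep2: "u t = cE lam (t - s0) * (h t + a + eps * of_real (t - b2) * dd * a)" for t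
      using urep1[of t] by (simp add: h_def g_def)
    have hnorm: "norm (h t + a + eps * of_real (t - b2) * dd * a) = exp ((s0 - t) * \<mu>) * norm (u t)" for t
      by (simp add: h_def norm_mult norm_cE \<mu>_def)
    have unorm2: "norm (u t) = exp ((t - s0) * \<mu>) * norm (h t + a + eps * of_real (t - b2) * dd * a)" for t
      by (subst urep2) (simp add: norm_mult norm_cE \<mu>_def)
    define h' where "h' t = cE lam (s0 - t) * (F (u t) - lam * u t) + eps * (cE lam (-2*\<tau>) * g (t - 2*\<tau>) - cE lam (-\<tau>) * g (t - \<tau>))" for t
    have hder: "(h has_vector_derivative h' t) (at t within {t..t1})" if t: "t \<in> {b2..<t1}" for t
    proof -
      have ke: "kap eps \<tau> t = eps" using t s0 t1(3) by (intro kap_eps[of k]) (auto simp: b2_def)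
      have "(u has_vector_derivative (F (u t) + eps * (u (t-2*\<tau>) - u (t-\<tau>)))) (at t within {t..t1})"
        using uder[of t t1] t b2 ke by simp
      from has_vector_derivative_diff[OF has_vector_derivative_diff[OF has_vector_derivative_mult[OF cE_deriv_m this] has_vector_derivative_const[of a]]
          has_vector_derivative_mult_right[OF has_vector_derivative_mult_left[OF has_vector_derivative_mult_left[OF ofreal_deriv[of b2]]], of eps dd a]]
      have d: "(h has_vector_derivative (cE lam (s0 - t) * (F (u t) + eps * (u (t-2*\<tau>) - u (t-\<tau>))) + - lam * cE lam (s0 - t) * u t - 0
               - eps * (1 * dd * a))) (at t within {t..t1})"
        unfolding h_def by (simp add: mult.assoc)
      have i1: "cE lam (s0 - t) * u (t - 2*\<tau>) = cE lam (-2*\<tau>) * (g (t - 2*\<tau>) + a)"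
      proof -
        have "cE lam (s0 - t) * u (t - 2*\<tau>) = (cE lam (s0 - t) * cE lam (t - 2*\<tau> - s0)) * (g (t - 2*\<tau>) + a)"
          by (subst urep1) (simp add: mult.assoc)
        also have "cE lam (s0 - t) * cE lam (t - 2*\<tau> - s0) = cE lam (-2*\<tau>)" by (simp add: cE_add)
        finally show ?thesis .
      qed
      have i2: "cE lam (s0 - t) * u (t - \<tau>) = cE lam (-\<tau>) * (g (t - \<tau>) + a)"
      proof -
        have "cE lam (s0 - t) * u (t - \<tau>) = (cE lam (s0 - t) * cE lam (t - \<tau> - s0)) * (g (t - \<tau>) + a)"
          by (subst urep1) (simp add: mult.assoc)
        also have "cE lam (s0 - t) * cE lam (t - \<tau> - s0) = cE lam (-\<tau>)" by (simp add: cE_add)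
        finally show ?thesis .
      qed
      have "cE lam (s0 - t) * (F (u t) + eps * (u (t-2*\<tau>) - u (t-\<tau>))) + - lam * cE lam (s0 - t) * u t - 0
               - eps * (1 * dd * a)
          = cE lam (s0 - t) * (F (u t) - lam * u t) + eps * (cE lam (s0 - t) * u (t - 2*\<tau>) - cE lam (s0 - t) * u (t - \<tau>)) - eps * dd * a"
        by (simp add: algebra_simps)
      also have "\<dots> = h' t" unfolding i1 i2 h'_def dd_def by (simp add: algebra_simps)
      finally show ?thesis using d by simp
    qed
    have hcont: "continuous_on {b2..t1} h"
      unfolding h_def using ucont b2 by (intro continuous_intros cE_cont_m) (auto elim: continuous_on_subset)
    define q where "q = \<eta> * norm a * (1 + nd + 2 * norm eps * D1)"
    have q: "q \<ge> 0" using eta nd_nn D1_pos by (simp add: q_def)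
    have hb2: "norm (h b2) \<le> \<eta> * D1 * norm a"
      using g1b[of b2] b2 by (simp add: h_def g_def e1b)
    have B2: "(\<eta> * D1 * norm a + q * (t - b2)) * exp (2*\<eta>*(t - b2)) \<le> \<eta> * D2 * norm a"
      if x: "0 \<le> t - b2" "t - b2 \<le> \<tau>" for t
    proof -
      have "\<eta> * (t - b2) \<le> 1 * \<tau>" using eta x by (intro mult_mono) auto
      then have ex: "exp (2*\<eta>*(t - b2)) \<le> exp (2*\<tau>)" by simp
      have "q * (t - b2) \<le> q * \<tau>" using q x by (intro mult_left_mono) auto
      then have "\<eta> * D1 * norm a + q * (t - b2) \<le> \<eta> * D1 * norm a + q * \<tau>" by simp
      then have "(\<eta> * D1 * norm a + q * (t - b2)) * exp (2*\<eta>*(t - b2)) \<le> (\<eta> * D1 * norm a + q * \<tau>) * exp (2*\<tau>)"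
        using ex q x eta D1_pos by (intro mult_mono) auto
      also have "\<dots> = \<eta> * D2 * norm a" by (simp add: D2_def q_def algebra_simps)
      finally show ?thesis .
    qed
    have tri: "norm (h t + a + eps * of_real (t - b2) * dd * a) \<le> norm (h t) + (1 + nd) * norm a"
      if x: "0 \<le> t - b2" "t - b2 \<le> \<tau>" for t
    proof -
      have "norm (h t + a + eps * of_real (t - b2) * dd * a) \<le> norm (h t) + norm a + norm (eps * of_real (t - b2) * dd * a)"
        by (smt (verit) norm_triangle_ineq)
      moreover have "norm (eps * of_real (t - b2) * dd * a) \<le> nd * norm a"
      proof -
        have "norm (eps * of_real (t - b2) * dd * a) = norm eps * (t - b2) * norm dd * norm a"
          using x by (simp add: norm_mult del: of_real_diff)
        also have "\<dots> \<le> norm eps * \<tau> * norm dd * norm a"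
          using x by (intro mult_right_mono mult_left_mono) auto
        finally show ?thesis by (simp add: nd_def)
      qed
      ultimately show ?thesis by (simp add: algebra_simps)
    qed
    have h1: "norm (h t) \<le> (\<eta> * D1 * norm a + q * (t - b2)) * exp (2*\<eta>*(t - b2))" if t: "t \<in> {b2..t1}" for t
    proof (rule gronwall_cmp[OF b2(1) hcont hder eta(1) q hb2 \<sigma> _ t])
      fix t assume t: "t \<in> {b2..<t1}"
        and lt: "norm (h t) < (\<eta> * D1 * norm a + q * (t - b2)) * exp (2 * \<eta> * (t - b2)) + \<sigma>"
      have x: "0 \<le> t - b2" "t - b2 \<le> \<tau>" using t t1 by (auto simp: b2_def)
      have "\<eta> * D2 * norm a \<le> D2 * norm a" using eta D2_pos by (simp add: mult_right_mono)
      then have ht: "norm (h t) \<le> D2 * norm a + \<sigma>" using lt B2[OF x] by linarith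
      have "norm (u t) \<le> exp (3*\<tau>*\<mu>) * (norm (h t) + (1 + nd) * norm a)"
      proof -
        have "exp ((t - s0) * \<mu>) \<le> exp (3*\<tau>*\<mu>)" using x exp_le3[of "t - s0"] by (simp add: \<mu>_def b2_def)
        then show ?thesis unfolding unorm2 using tri[OF x] by (intro mult_mono) auto
      qed
      also have "\<dots> \<le> exp (3*\<tau>*\<mu>) * ((1 + nd + D2) * norm a + \<sigma>)"
        using ht by (intro mult_left_mono) (auto simp: algebra_simps)
      also have "\<dots> = exp (3*\<tau>*\<mu>) * (1 + nd + D2) * norm a + r/2" using e\<sigma> by (simp add: algebra_simps)
      also have "exp (3*\<tau>*\<mu>) * (1 + nd + D2) * norm a \<le> Cb * norm a"
        using nd_nn D1_pos by (intro mult_right_mono) (auto simp: Cb_def \<mu>_def)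
      finally have ur: "norm (u t) \<le> r" using Cba by linarith
      have n1: "norm (cE lam (s0 - t) * (F (u t) - lam * u t)) \<le> \<eta> * norm (h t) + \<eta> * (1 + nd) * norm a"
      proof -
        have "norm (cE lam (s0 - t) * (F (u t) - lam * u t)) = exp ((s0 - t) * \<mu>) * norm (F (u t) - lam * u t)"
          by (simp add: norm_mult norm_cE \<mu>_def)
        also have "\<dots> \<le> exp ((s0 - t) * \<mu>) * (\<eta> * norm (u t))"
          using region[OF ur] by (intro mult_left_mono) auto
        also have "\<dots> = \<eta> * norm (h t + a + eps * of_real (t - b2) * dd * a)" using hnorm by simp
        also have "\<dots> \<le> \<eta> * (norm (h t) + (1 + nd) * norm a)" using eta tri[OF x] by (intro mult_left_mono) auto
        finally show ?thesis by (simp add: algebra_simps)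
      qed
      have gg: "norm (cE lam (- c) * g (t - c)) \<le> \<eta> * D1 * norm a" if c: "c = \<tau> \<or> c = 2*\<tau>" for c
      proof -
        have ct: "t - c \<in> {s0..e1}" using c x e1b tau by (auto simp: b2_def)
        have "norm (cE lam (- c) * g (t - c)) = exp (- c * \<mu>) * norm (g (t - c))" by (simp add: norm_mult norm_cE \<mu>_def)
        also have "\<dots> \<le> 1 * (\<eta> * D1 * norm a)"
          using exp_neg_le1[of c] c tau g1b[OF ct] by (intro mult_mono) (auto simp: \<mu>_def)
        finally show ?thesis by simp
      qed
      have n2: "norm (eps * (cE lam (-2*\<tau>) * g (t - 2*\<tau>) - cE lam (-\<tau>) * g (t - \<tau>))) \<le> norm eps * (2 * (\<eta> * D1 * norm a))"
      proof -
        have "norm (cE lam (-2*\<tau>) * g (t - 2*\<tau>) - cE lam (-\<tau>) * g (t - \<tau>)) \<le> norm (cE lam (-2*\<tau>) * g (t - 2*\<tau>)) + norm (cE lam (-\<tau>) * g (t - \<tau>))"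
          by (rule norm_triangle_ineq4)
        also have "\<dots> \<le> 2 * (\<eta> * D1 * norm a)" using gg[of "2*\<tau>"] gg[of \<tau>] by simp
        finally show ?thesis by (simp add: norm_mult mult_left_mono)
      qed
      have "norm (h' t) \<le> norm (cE lam (s0 - t) * (F (u t) - lam * u t)) + norm (eps * (cE lam (-2*\<tau>) * g (t - 2*\<tau>) - cE lam (-\<tau>) * g (t - \<tau>)))"
        unfolding h'_def by (rule norm_triangle_ineq)
      also have "\<dots> \<le> \<eta> * norm (h t) + q" using n1 n2 by (simp add: q_def algebra_simps)
      finally show "norm (h' t) \<le> \<eta> * norm (h t) + q" .
    qed
    have h1b: "norm (h t) \<le> \<eta> * D2 * norm a" if t: "t \<in> {b2..t1}" for t
      using h1[OF t] B2[of t] t t1 by (auto simp: b2_def)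
    have u2: "norm (u t) \<le> Cb * norm a" if t: "t \<in> {b2..t1}" for t
    proof -
      have x: "0 \<le> t - b2" "t - b2 \<le> \<tau>" using t t1 by (auto simp: b2_def)
      have "norm (u t) \<le> exp (3*\<tau>*\<mu>) * (norm (h t) + (1 + nd) * norm a)"
      proof -
        have "exp ((t - s0) * \<mu>) \<le> exp (3*\<tau>*\<mu>)" using x exp_le3[of "t - s0"] by (simp add: \<mu>_def b2_def)
        then show ?thesis unfolding unorm2 using tri[OF x] by (intro mult_mono) auto
      qed
      also have "\<dots> \<le> exp (3*\<tau>*\<mu>) * ((1 + nd + D2) * norm a)"
      proof -
        have "\<eta> * D2 * norm a \<le> D2 * norm a" using eta D2_pos by (simp add: mult_right_mono)
        then show ?thesis using h1b[OF t] by (intro mult_left_mono) (auto simp: algebra_simps)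
      qed
      also have "\<dots> \<le> Cb * norm a"
        using nd_nn D1_pos by (auto simp: Cb_def \<mu>_def intro!: mult_right_mono)
      finally show ?thesis .
    qed
    have part1: "\<forall>t\<in>{s0..t1}. norm (u t) \<le> Cb * norm (u s0)"
    proof
      fix t assume t: "t \<in> {s0..t1}"
      show "norm (u t) \<le> Cb * norm (u s0)"
      proof (cases "t \<le> b2")
        case True then show ?thesis using u1[of t] t e1b by (simp add: a_def)
      next
        case False then show ?thesis using u2[of t] t by (simp add: a_def)
      qed
    qed
    have part2: "norm (u t1 - mm * u s0) \<le> exp(3*\<tau>*Re lam) * \<eta> * D2 * norm (u s0)" if t1e: "t1 = s0 + 3*\<tau>"
    proof -
      have U: "u t1 = cE lam (3*\<tau>) * (h t1 + a + eps * of_real \<tau> * dd * a)"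
        using urep2[of t1] t1e by (simp add: b2_def)
      have Dd: "cE lam (3*\<tau>) * dd = cE lam \<tau> - cE lam (2*\<tau>)"
        by (simp add: dd_def cE_add right_diff_distrib)
      have "u t1 - mm * a = cE lam (3*\<tau>) * h t1 + eps * of_real \<tau> * a * (cE lam (3*\<tau>) * dd - (cE lam \<tau> - cE lam (2*\<tau>)))"
        unfolding U mm_def by (simp add: algebra_simps)
      also have "\<dots> = cE lam (3*\<tau>) * h t1" using Dd by simp
      finally have "u t1 - mm * a = cE lam (3*\<tau>) * h t1" .
      then have "norm (u t1 - mm * a) = exp (3*\<tau>*\<mu>) * norm (h t1)" by (simp add: norm_mult norm_cE \<mu>_def)
      also have "\<dots> \<le> exp (3*\<tau>*\<mu>) * (\<eta> * D2 * norm a)" using h1b[of t1] b2 by (intro mult_left_mono) auto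
      finally show ?thesis by (simp add: a_def \<mu>_def algebra_simps)
    qed
    show ?thesis using part1 part2 by blast
  qed
qed

end

lemma floor_period:
  fixes t \<tau> :: real assumes "\<tau> > 0" "t \<ge> 0"
  shows "3 * real (nat \<lfloor>t / (3*\<tau>)\<rfloor>) * \<tau> \<le> t \<and> t \<le> 3 * real (nat \<lfloor>t / (3*\<tau>)\<rfloor>) * \<tau> + 3*\<tau>"
proof -
  define x where "x = t / (3*\<tau>)"
  have x0: "x \<ge> 0" using assms by (simp add: x_def)
  have eq: "real (nat \<lfloor>x\<rfloor>) = of_int \<lfloor>x\<rfloor>" using x0 by simp
  have "of_int \<lfloor>x\<rfloor> \<le> x" "x < of_int \<lfloor>x\<rfloor> + 1" by linarith+
  moreover have "t = 3 * x * \<tau>" using assms by (simp add: x_def)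
  moreover have "3 * of_int \<lfloor>x\<rfloor> * \<tau> \<le> 3 * x * \<tau>" using assms by (intro mult_right_mono) auto
  moreover have "3 * x * \<tau> \<le> 3 * (of_int \<lfloor>x\<rfloor> + 1) * \<tau>"
  proof -
    have fl: "x \<le> of_int \<lfloor>x\<rfloor> + 1" by linarith
    have "3 * x \<le> 3 * (of_int \<lfloor>x\<rfloor> + 1)" using mult_left_mono[OF fl, of 3] by simp
    then show ?thesis using assms by (intro mult_right_mono) auto
  qed
  moreover have "3 * (of_int \<lfloor>x\<rfloor> + 1) * \<tau> = 3 * of_int \<lfloor>x\<rfloor> * \<tau> + 3*\<tau>" by (simp add: algebra_simps)
  ultimately have "3 * of_int \<lfloor>x\<rfloor> * \<tau> \<le> t" "t \<le> 3 * of_int \<lfloor>x\<rfloor> * \<tau> + 3*\<tau>"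
    by linarith+
  then have "3 * real (nat \<lfloor>x\<rfloor>) * \<tau> \<le> t \<and> t \<le> 3 * real (nat \<lfloor>x\<rfloor>) * \<tau> + 3*\<tau>"
    unfolding eq by simp
  then show ?thesis by (simp only: x_def)
qed

context core begin

lemma all_periods:
  assumes sol: "csol F eps \<tau> u S" and Sint: "\<And>t. t \<in> S \<Longrightarrow> {0..t} \<subseteq> S"
    and St: "\<And>t. t \<in> S \<Longrightarrow> 0 \<le> t"
    and q: "0 \<le> q" "q < 1" "norm mm + exp(3*\<tau>*Re lam) * \<eta> * D2 \<le> q"
    and small: "norm (u 0) \<le> r / (2*Cb)"
    and t: "t \<in> S" "3*real k*\<tau> \<le> t" "t \<le> 3*real k*\<tau> + 3*\<tau>"
  shows "norm (u t) \<le> Cb * q^k * norm (u 0)"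
proof -
  have pk: "3 * real k * \<tau> \<in> S \<longrightarrow> norm (u (3 * real k * \<tau>)) \<le> q^k * norm (u 0)" for k
  proof (induction k)
    case 0 then show ?case by simp
  next
    case (Suc k)
    show ?case
    proof
      assume inS: "3 * real (Suc k) * \<tau> \<in> S"
      have "3 * real k * \<tau> \<in> {0..3 * real (Suc k) * \<tau>}" using tau by auto
      then have kS: "3 * real k * \<tau> \<in> S" using Sint[OF inS] by auto
      define a where "a = u (3 * real k * \<tau>)"
      have ak: "norm a \<le> q^k * norm (u 0)" using Suc kS by (simp add: a_def)
      have "q^k \<le> 1" using q by (simp add: power_le_one)
      then have "q^k * norm (u 0) \<le> norm (u 0)" using mult_left_le_one_le[of "norm (u 0)" "q^k"] q by simp
      then have sm: "norm a \<le> r / (2*Cb)" using ak small by linarith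
      have e: "3 * real (Suc k) * \<tau> = 3 * real k * \<tau> + 3*\<tau>" by (simp add: algebra_simps)
      have P: "norm (u (3 * real (Suc k) * \<tau>) - mm * a) \<le> exp(3*\<tau>*Re lam) * \<eta> * D2 * norm a"
        using period[OF sol Sint refl inS, of k] sm e tau unfolding a_def by auto
      have "norm (u (3 * real (Suc k) * \<tau>)) \<le> norm (mm * a) + exp(3*\<tau>*Re lam) * \<eta> * D2 * norm a"
        using P norm_triangle_sub[of "u (3 * real (Suc k) * \<tau>)" "mm * a"] by linarith
      also have "\<dots> = (norm mm + exp(3*\<tau>*Re lam) * \<eta> * D2) * norm a" by (simp add: norm_mult algebra_simps)
      also have "\<dots> \<le> q * norm a" using q by (intro mult_right_mono) auto
      also have "\<dots> \<le> q * (q^k * norm (u 0))" using ak q by (intro mult_left_mono) auto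
      finally show "norm (u (3 * real (Suc k) * \<tau>)) \<le> q ^ Suc k * norm (u 0)" by simp
    qed
  qed
  have kS: "3 * real k * \<tau> \<in> S" using Sint[OF t(1)] t tau by auto
  define a where "a = u (3 * real k * \<tau>)"
  have ak: "norm a \<le> q^k * norm (u 0)" using pk[of k] kS by (simp add: a_def)
  have "q^k \<le> 1" using q by (simp add: power_le_one)
  then have "q^k * norm (u 0) \<le> norm (u 0)" using mult_left_le_one_le[of "norm (u 0)" "q^k"] q by simp
  then have sm: "norm a \<le> r / (2*Cb)" using ak small by linarith
  have "norm (u t) \<le> Cb * norm a"
    using period[OF sol Sint refl t(1), of k] sm t unfolding a_def by auto
  also have "\<dots> \<le> Cb * (q^k * norm (u 0))" using ak Cb_pos by (intro mult_left_mono) auto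
  finally show ?thesis by (simp add: mult.assoc)
qed

lemma bounded_sol:
  assumes sol: "csol F eps \<tau> u S" and Sint: "\<And>t. t \<in> S \<Longrightarrow> {0..t} \<subseteq> S"
    and St: "\<And>t. t \<in> S \<Longrightarrow> 0 \<le> t"
    and q: "0 \<le> q" "q < 1" "norm mm + exp(3*\<tau>*Re lam) * \<eta> * D2 \<le> q"
    and small: "norm (u 0) \<le> r / (2*Cb)"
    and t: "t \<in> S"
  shows "norm (u t) \<le> Cb * norm (u 0)"
proof -
  define k where "k = nat \<lfloor>t / (3*\<tau>)\<rfloor>"
  have "3*real k*\<tau> \<le> t" "t \<le> 3*real k*\<tau> + 3*\<tau>" using floor_period[OF tau St[OF t]] by (auto simp: k_def)
  then have "norm (u t) \<le> Cb * q^k * norm (u 0)" by (intro all_periods[OF sol Sint St q small t])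
  also have "\<dots> \<le> Cb * 1 * norm (u 0)" using q Cb_pos by (intro mult_right_mono mult_left_mono power_le_one) auto
  finally show ?thesis by simp
qed

lemma conv_sol:
  assumes sol: "csol F eps \<tau> u {0..}"
    and q: "0 \<le> q" "q < 1" "norm mm + exp(3*\<tau>*Re lam) * \<eta> * D2 \<le> q"
    and small: "norm (u 0) \<le> r / (2*Cb)"
  shows "(u \<longlongrightarrow> 0) at_top"
proof (rule tendstoI)
  fix e :: real assume e: "e > 0"
  have "(\<lambda>n. q^n) \<longlonglongrightarrow> 0" using q by (intro LIMSEQ_power_zero) auto
  then have "(\<lambda>n. Cb * norm (u 0) * q^n) \<longlonglongrightarrow> Cb * norm (u 0) * 0" by (intro tendsto_mult tendsto_const)
  then have "\<forall>\<^sub>F n in sequentially. dist (Cb * norm (u 0) * q^n) 0 < e" using e by (simp add: tendsto_iff)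
  then obtain N where N: "\<And>n. n \<ge> N \<Longrightarrow> \<bar>Cb * norm (u 0) * q^n\<bar> < e" by (auto simp: eventually_sequentially)
  have Sint: "\<And>t. t \<in> {0..} \<Longrightarrow> {0..t} \<subseteq> {0::real..}" by auto
  show "\<forall>\<^sub>F t in at_top. dist (u t) 0 < e"
    using eventually_ge_at_top[of "3 * real N * \<tau>"]
  proof eventually_elim
    case (elim t)
    have t0: "t \<ge> 0" using elim tau by (smt (verit) mult_nonneg_nonneg of_nat_0_le_iff)
    define k where "k = nat \<lfloor>t / (3*\<tau>)\<rfloor>"
    have kp: "3*real k*\<tau> \<le> t" "t \<le> 3*real k*\<tau> + 3*\<tau>" using floor_period[OF tau t0] by (auto simp: k_def)
    have "real N \<le> t / (3*\<tau>)" using elim tau by (simp add: field_simps)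
    then have "N \<le> k" unfolding k_def by linarith
    have "norm (u t) \<le> Cb * q^k * norm (u 0)" using t0 kp by (intro all_periods[OF sol Sint _ q small]) auto
    also have "\<dots> \<le> Cb * norm (u 0) * q^N"
    proof -
      have "q^k \<le> q^N" using q \<open>N \<le> k\<close> by (intro power_decreasing) auto
      then have "q^k * (Cb * norm (u 0)) \<le> q^N * (Cb * norm (u 0))" by (intro mult_right_mono) (use Cb_pos in auto)
      then show ?thesis by (simp add: algebra_simps)
    qed
    also have "\<dots> < e" using N[of N] by simp
    finally show ?case by simp
  qed
qed

end

lemma at_right_ivl: fixes t b :: real shows "t < b \<Longrightarrow> at t within {t..b} = at t within {t..}"
  by (rule at_within_nhd[of t "{..<b}"]) auto


lemma period_exists:
  fixes F :: "complex \<Rightarrow> complex"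
  assumes L: "L > 0" "\<And>z w. norm (F z - F w) \<le> L * norm (z - w)" and tau: "\<tau> > 0"
  shows "\<exists>w. continuous_on {0..3*\<tau>} w \<and> w 0 = z \<and>
     (\<forall>t\<in>{0..<3*\<tau>}. (w has_vector_derivative (F (w t) + kap eps \<tau> t * (w (t-2*\<tau>) - w (t-\<tau>)))) (at t within {t..3*\<tau>}))"
proof -
  obtain v1 where v1: "continuous_on {0..2*\<tau>} v1" "v1 0 = z"
    "\<forall>t\<in>{0..2*\<tau>}. (v1 has_vector_derivative (F (v1 t) + 0)) (at t within {0..2*\<tau>})"
  proof -
    have "\<exists>v. continuous_on {0..2*\<tau>} v \<and> v 0 = z \<and> (\<forall>t\<in>{0..2*\<tau>}. (v has_vector_derivative (F (v t) + 0)) (at t within {0..2*\<tau>}))"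
      by (rule picard_exists[OF L, where h="\<lambda>t. 0"]) (use tau in auto)
    then show ?thesis using that by auto
  qed
  define h where "h t = eps * (v1 (t - 2*\<tau>) - v1 (t - \<tau>))" for t
  have hc: "continuous_on {2*\<tau>..3*\<tau>} h"
  proof -
    have "continuous_on {2*\<tau>..3*\<tau>} (\<lambda>t. v1 (t - 2*\<tau>))"
      by (rule continuous_on_compose2[OF v1(1)]) (use tau in \<open>auto intro!: continuous_intros\<close>)
    moreover have "continuous_on {2*\<tau>..3*\<tau>} (\<lambda>t. v1 (t - \<tau>))"
      by (rule continuous_on_compose2[OF v1(1)]) (use tau in \<open>auto intro!: continuous_intros\<close>)
    ultimately show ?thesis unfolding h_def by (intro continuous_intros)
  qed
  obtain v2 where v2: "continuous_on {2*\<tau>..3*\<tau>} v2" "v2 (2*\<tau>) = v1 (2*\<tau>)"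
    "\<forall>t\<in>{2*\<tau>..3*\<tau>}. (v2 has_vector_derivative (F (v2 t) + h t)) (at t within {2*\<tau>..3*\<tau>})"
  proof -
    have "\<exists>v. continuous_on {2*\<tau>..3*\<tau>} v \<and> v (2*\<tau>) = v1 (2*\<tau>) \<and> (\<forall>t\<in>{2*\<tau>..3*\<tau>}. (v has_vector_derivative (F (v t) + h t)) (at t within {2*\<tau>..3*\<tau>}))"
      by (rule picard_exists[OF L hc]) (use tau in auto)
    then show ?thesis using that by auto
  qed
  define w where "w t = (if t \<le> 2*\<tau> then v1 t else v2 t)" for t
  have w1: "w t = v1 t" if "t \<le> 2*\<tau>" for t using that by (simp add: w_def)
  have w2: "w t = v2 t" if "2*\<tau> \<le> t" for t using that v2(2) by (auto simp: w_def)
  have wc: "continuous_on {0..3*\<tau>} w"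
  proof -
    have "continuous_on {0..2*\<tau>} w" using v1(1) by (rule continuous_on_cong[THEN iffD1, rotated -1]) (auto simp: w1)
    moreover have "continuous_on {2*\<tau>..3*\<tau>} w" using v2(1) by (rule continuous_on_cong[THEN iffD1, rotated -1]) (auto simp: w2)
    ultimately have "continuous_on ({0..2*\<tau>} \<union> {2*\<tau>..3*\<tau>}) w" by (intro continuous_on_closed_Un) auto
    moreover have "{0..2*\<tau>} \<union> {2*\<tau>..3*\<tau>} = {0..3*\<tau>}" using tau by auto
    ultimately show ?thesis by simp
  qed
  show ?thesis
  proof (intro exI[of _ w] conjI ballI)
    show "continuous_on {0..3*\<tau>} w" by (rule wc)
    show "w 0 = z" using v1(2) tau by (simp add: w_def)
    fix t assume t: "t \<in> {0..<3*\<tau>}"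
    show "(w has_vector_derivative (F (w t) + kap eps \<tau> t * (w (t-2*\<tau>) - w (t-\<tau>)))) (at t within {t..3*\<tau>})"
    proof (cases "t < 2*\<tau>")
      case True
      have k0: "kap eps \<tau> t = 0" using True t tau by (intro kap_zero[of \<tau> 0]) auto
      have "(v1 has_vector_derivative F (v1 t)) (at t within {0..2*\<tau>})" using v1(3) t True by auto
      then have "(v1 has_vector_derivative F (v1 t)) (at t within {t..2*\<tau>})"
        by (rule has_vector_derivative_within_subset) (use t in auto)
      then have "(w has_vector_derivative F (v1 t)) (at t within {t..2*\<tau>})"
        by (rule has_vector_derivative_transform[rotated 2]) (use True in \<open>auto simp: w1\<close>)
      then have "(w has_vector_derivative F (w t)) (at t within {t..2*\<tau>})"
        using True by (simp add: w1)
      then have "(w has_vector_derivative F (w t)) (at t within {t..3*\<tau>})"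
        using at_right_ivl[OF True] at_right_ivl[of t "3*\<tau>"] t by simp
      then show ?thesis using k0 by simp
    next
      case False
      have ke: "kap eps \<tau> t = eps" using False t by (intro kap_eps[of 0]) auto
      have "(v2 has_vector_derivative F (v2 t) + h t) (at t within {2*\<tau>..3*\<tau>})" using v2(3) t False by auto
      then have "(v2 has_vector_derivative F (v2 t) + h t) (at t within {t..3*\<tau>})"
        by (rule has_vector_derivative_within_subset) (use False in auto)
      then have "(w has_vector_derivative F (v2 t) + h t) (at t within {t..3*\<tau>})"
        by (rule has_vector_derivative_transform[rotated 2]) (use False t in \<open>auto simp: w2\<close>)
      moreover have "F (v2 t) + h t = F (w t) + kap eps \<tau> t * (w (t-2*\<tau>) - w (t-\<tau>))"
        using False t tau by (simp add: ke h_def w1 w2)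
      ultimately show ?thesis by simp
    qed
  qed
qed

lemma idx_bounds:
  fixes t \<tau> :: real assumes "\<tau> > 0" "t \<ge> 0"
  shows "3 * real (nat \<lfloor>t / (3*\<tau>)\<rfloor>) * \<tau> \<le> t \<and> t < 3 * real (nat \<lfloor>t / (3*\<tau>)\<rfloor>) * \<tau> + 3*\<tau>"
proof -
  define x where "x = t / (3*\<tau>)"
  have x0: "x \<ge> 0" using assms by (simp add: x_def)
  have eq: "real (nat \<lfloor>x\<rfloor>) = of_int \<lfloor>x\<rfloor>" using x0 by simp
  have tx: "t = 3 * x * \<tau>" using assms by (simp add: x_def)
  have "3 * of_int \<lfloor>x\<rfloor> * \<tau> \<le> 3 * x * \<tau>" using assms by (intro mult_right_mono) auto
  moreover have "3 * x * \<tau> < 3 * (of_int \<lfloor>x\<rfloor> + 1) * \<tau>"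
  proof -
    have fl: "x < of_int \<lfloor>x\<rfloor> + 1" by linarith
    have "3 * x < 3 * (of_int \<lfloor>x\<rfloor> + 1)" using mult_strict_left_mono[OF fl, of 3] by simp
    then show ?thesis using assms by (intro mult_strict_right_mono) auto
  qed
  moreover have "3 * (of_int \<lfloor>x\<rfloor> + 1) * \<tau> = 3 * of_int \<lfloor>x\<rfloor> * \<tau> + 3*\<tau>" by (simp add: algebra_simps)
  ultimately have "3 * of_int \<lfloor>x\<rfloor> * \<tau> \<le> t" "t < 3 * of_int \<lfloor>x\<rfloor> * \<tau> + 3*\<tau>"
    using tx by linarith+
  then have "3 * real (nat \<lfloor>x\<rfloor>) * \<tau> \<le> t \<and> t < 3 * real (nat \<lfloor>x\<rfloor>) * \<tau> + 3*\<tau>"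
    unfolding eq by simp
  then show ?thesis by (simp only: x_def)
qed

lemma idx_unique:
  fixes t \<tau> :: real assumes "\<tau> > 0" "3 * real k * \<tau> \<le> t" "t < 3 * real k * \<tau> + 3*\<tau>"
  shows "nat \<lfloor>t / (3*\<tau>)\<rfloor> = k"
proof -
  have "real k \<le> t / (3*\<tau>)" using assms by (simp add: field_simps)
  moreover have "t / (3*\<tau>) < real k + 1" using assms by (simp add: field_simps)
  ultimately have "\<lfloor>t / (3*\<tau>)\<rfloor> = int k" by (simp add: floor_eq_iff)
  then show ?thesis by simp
qed

lemma exists_global:
  fixes F :: "complex \<Rightarrow> complex"
  assumes L: "L > 0" "\<And>z w. norm (F z - F w) \<le> L * norm (z - w)" and tau: "\<tau> > 0"
  shows "\<exists>u. csol F eps \<tau> u {0..} \<and> u 0 = z0"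
proof -
  define P where "P z w \<longleftrightarrow> continuous_on {0..3*\<tau>} w \<and> w 0 = z \<and>
     (\<forall>t\<in>{0..<3*\<tau>}. (w has_vector_derivative (F (w t) + kap eps \<tau> t * (w (t-2*\<tau>) - w (t-\<tau>)))) (at t within {t..3*\<tau>}))" for z w
  have ex: "\<exists>w. P z w" for z unfolding P_def by (rule period_exists[OF L tau])
  define W where "W z = (SOME w. P z w)" for z
  have W: "P z (W z)" for z unfolding W_def using ex by (rule someI_ex)
  have Wc: "continuous_on {0..3*\<tau>} (W z)" and W0: "W z 0 = z" for z using W[of z] by (auto simp: P_def)
  have Wd: "((W z) has_vector_derivative (F (W z t) + kap eps \<tau> t * (W z (t-2*\<tau>) - W z (t-\<tau>)))) (at t within {t..3*\<tau>})"
    if "t \<in> {0..<3*\<tau>}" for z t using W[of z] that by (auto simp: P_def)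
  define zs where "zs k = ((\<lambda>z. W z (3*\<tau>)) ^^ k) z0" for k
  have zsS: "zs (Suc k) = W (zs k) (3*\<tau>)" for k by (simp add: zs_def)
  define idx where "idx t = nat \<lfloor>t / (3*\<tau>)\<rfloor>" for t
  define u where "u t = W (zs (idx t)) (t - 3 * real (idx t) * \<tau>)" for t
  have ueq: "u t = W (zs k) (t - 3*real k*\<tau>)" if t: "3*real k*\<tau> \<le> t" "t \<le> 3*real k*\<tau> + 3*\<tau>" for k t
  proof (cases "t < 3*real k*\<tau> + 3*\<tau>")
    case True
    then have "idx t = k" unfolding idx_def using t tau by (intro idx_unique) auto
    then show ?thesis by (simp add: u_def)
  next
    case False
    then have te: "t = 3*real (Suc k)*\<tau>" using t by (simp add: algebra_simps)
    then have "idx t = Suc k" unfolding idx_def using tau by (intro idx_unique) auto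
    then have "u t = zs (Suc k)" by (simp add: u_def te W0)
    also have "\<dots> = W (zs k) (t - 3*real k*\<tau>)" by (simp add: zsS te algebra_simps)
    finally show ?thesis .
  qed
  have cseg: "continuous_on {3*real k*\<tau>..3*real k*\<tau> + 3*\<tau>} u" for k
  proof -
    have "continuous_on {3*real k*\<tau>..3*real k*\<tau> + 3*\<tau>} (\<lambda>t. W (zs k) (t - 3*real k*\<tau>))"
      by (rule continuous_on_compose2[OF Wc]) (auto intro!: continuous_intros)
    then show ?thesis by (rule continuous_on_cong[THEN iffD1, rotated -1]) (auto simp: ueq)
  qed
  have contn: "continuous_on {0..3*real n*\<tau>} u" for n
  proof (induction n)
    case 0 then show ?case by simp
  next
    case (Suc n)
    have "continuous_on ({0..3*real n*\<tau>} \<union> {3*real n*\<tau>..3*real n*\<tau> + 3*\<tau>}) u"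
      by (intro continuous_on_closed_Un Suc cseg) auto
    moreover have "{0..3*real n*\<tau>} \<union> {3*real n*\<tau>..3*real n*\<tau> + 3*\<tau>} = {0..3*real (Suc n)*\<tau>}"
    proof -
      have nn: "0 \<le> 3*real n*\<tau>" using tau by simp
      have e: "3*real (Suc n)*\<tau> = 3*real n*\<tau> + 3*\<tau>" by (simp add: algebra_simps)
      show ?thesis unfolding e by (rule ivl_disj_un_two_touch(4)) (use nn tau in auto)
    qed
    ultimately show ?case by simp
  qed
  have cont: "continuous_on {0..} u"
    unfolding continuous_on_eq_continuous_within
  proof
    fix t :: real assume t: "t \<in> {0..}"
    define n where "n = Suc (idx t)"
    have t0: "0 \<le> t" using t by simp
    have b: "t < 3*real (idx t)*\<tau> + 3*\<tau>" using idx_bounds[OF tau t0] unfolding idx_def by blast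
    have "3*real n*\<tau> = 3*real (idx t)*\<tau> + 3*\<tau>" by (simp add: n_def algebra_simps)
    then have "t < 3*real n*\<tau>" using b by linarith
    then have "continuous (at t within {0..3*real n*\<tau>}) u"
      using contn[of n] t unfolding continuous_on_eq_continuous_within by auto
    moreover have "at t within {0..3*real n*\<tau>} = at t within {0..}"
      by (rule at_within_nhd[of t "{..<3*real n*\<tau>}"]) (use \<open>t < 3*real n*\<tau>\<close> in auto)
    ultimately show "continuous (at t within {0..}) u" by simp
  qed
  have der: "(u has_vector_derivative (F (u t) + kap eps \<tau> t * (u (t - 2*\<tau>) - u (t - \<tau>)))) (at t within {0..} \<inter> {t..})"
    if t: "t \<in> {0..}" for t
  proof -
    define k where "k = idx t"
    have t0: "0 \<le> t" using t by simp
    have kb: "3*real k*\<tau> \<le> t" "t < 3*real k*\<tau> + 3*\<tau>" using idx_bounds[OF tau t0] unfolding k_def idx_def by blast+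
    define t' where "t' = t - 3*real k*\<tau>"
    have t': "t' \<in> {0..<3*\<tau>}" using kb by (auto simp: t'_def)
    have d1: "((\<lambda>s. s - 3*real k*\<tau>) has_vector_derivative 1) (at t within {t..3*real k*\<tau> + 3*\<tau>})"
      by (auto intro!: derivative_eq_intros simp: has_real_derivative_iff_has_vector_derivative[symmetric])
    have d2: "((W (zs k)) has_vector_derivative (F (W (zs k) t') + kap eps \<tau> t' * (W (zs k) (t'-2*\<tau>) - W (zs k) (t'-\<tau>))))
               (at ((\<lambda>s. s - 3*real k*\<tau>) t) within (\<lambda>s. s - 3*real k*\<tau>) ` {t..3*real k*\<tau> + 3*\<tau>})"
    proof -
      have "((W (zs k)) has_vector_derivative (F (W (zs k) t') + kap eps \<tau> t' * (W (zs k) (t'-2*\<tau>) - W (zs k) (t'-\<tau>))))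
               (at t' within (\<lambda>s. s - 3*real k*\<tau>) ` {t..3*real k*\<tau> + 3*\<tau>})"
        by (rule has_vector_derivative_within_subset[OF Wd[OF t']]) (auto simp: t'_def)
      then show ?thesis by (simp add: t'_def)
    qed
    from vector_diff_chain_within[OF d1 d2]
    have "((\<lambda>s. W (zs k) (s - 3*real k*\<tau>)) has_vector_derivative (F (W (zs k) t') + kap eps \<tau> t' * (W (zs k) (t'-2*\<tau>) - W (zs k) (t'-\<tau>))))
            (at t within {t..3*real k*\<tau> + 3*\<tau>})" by (simp add: o_def)
    then have "(u has_vector_derivative (F (W (zs k) t') + kap eps \<tau> t' * (W (zs k) (t'-2*\<tau>) - W (zs k) (t'-\<tau>))))
            (at t within {t..3*real k*\<tau> + 3*\<tau>})"
      by (rule has_vector_derivative_transform[rotated 2]) (use kb in \<open>auto simp: ueq\<close>)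
    then have D: "(u has_vector_derivative (F (W (zs k) t') + kap eps \<tau> t' * (W (zs k) (t'-2*\<tau>) - W (zs k) (t'-\<tau>))))
            (at t within {0..} \<inter> {t..})"
      using at_right_ivl[OF kb(2)] t by (simp add: Int_absorb1 subset_eq)
    have ut: "u t = W (zs k) t'" using ueq[of k t] kb by (simp add: t'_def)
    have rhs: "F (W (zs k) t') + kap eps \<tau> t' * (W (zs k) (t'-2*\<tau>) - W (zs k) (t'-\<tau>))
        = F (u t) + kap eps \<tau> t * (u (t - 2*\<tau>) - u (t - \<tau>))"
    proof (cases "t' < 2*\<tau>")
      case True
      have "kap eps \<tau> t' = 0" using True t' tau by (intro kap_zero[of \<tau> 0]) auto
      moreover have "kap eps \<tau> t = 0" using True kb tau by (intro kap_zero[of \<tau> k]) (auto simp: t'_def)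
      ultimately show ?thesis by (simp add: ut)
    next
      case False
      have "kap eps \<tau> t' = eps" using False t' by (intro kap_eps[of 0]) auto
      moreover have "kap eps \<tau> t = eps" using False kb by (intro kap_eps[of k]) (auto simp: t'_def)
      moreover have "u (t - 2*\<tau>) = W (zs k) (t' - 2*\<tau>)"
      proof -
        have "u (t - 2*\<tau>) = W (zs k) (t - 2*\<tau> - 3*real k*\<tau>)" using False kb tau by (intro ueq) (auto simp: t'_def)
        moreover have "t - 2*\<tau> - 3*real k*\<tau> = t' - 2*\<tau>" by (simp add: t'_def)
        ultimately show ?thesis by simp
      qed
      moreover have "u (t - \<tau>) = W (zs k) (t' - \<tau>)"
      proof -
        have "u (t - \<tau>) = W (zs k) (t - \<tau> - 3*real k*\<tau>)" using False kb tau by (intro ueq) (auto simp: t'_def)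
        moreover have "t - \<tau> - 3*real k*\<tau> = t' - \<tau>" by (simp add: t'_def)
        ultimately show ?thesis by simp
      qed
      ultimately show ?thesis by (simp add: ut)
    qed
    show ?thesis using D rhs by simp
  qed
  have u0: "u 0 = z0" using ueq[of 0 0] tau by (simp add: W0 zs_def)
  show ?thesis using cont der u0 unfolding csol_def by blast
qed

lemma cancel_aux: "e \<noteq> 0 \<Longrightarrow> t \<noteq> 0 \<Longrightarrow> P \<noteq> 0 \<Longrightarrow> (e * Y * P) / (t * e * P) * t = (Y::complex)"
  by (simp add: field_simps)

lemma m_identity:
  fixes e w z r t :: complex
  assumes w: "w \<noteq> 0" and E: "e \<noteq> 0" and t: "t \<noteq> 0" and n1: "1 - e * w \<noteq> 0" and n2: "w - e \<noteq> 0"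
  shows "e^3*w^3 + ((r*z/w - r*e*z/w^2 - e^3*w^2 + e^4*w)
      / (t*e*((1 - e*w)*(1 - e/w)))) * t * (e*w - e^2*w^2) = r*z"
proof -
  have n3: "1 - e/w \<noteq> 0" using n2 w by (auto simp: field_simps)
  have X: "(r*z/w - r*e*z/w^2 - e^3*w^2 + e^4*w) * (e*w - e^2*w^2)
      = e * (r * z - e^3 * w^3) * ((1 - e*w)*(1 - e/w))"
    using w by (simp add: field_simps) algebra
  have "((r*z/w - r*e*z/w^2 - e^3*w^2 + e^4*w) / (t*e*((1 - e*w)*(1 - e/w)))) * t * (e*w - e^2*w^2)
      = ((r*z/w - r*e*z/w^2 - e^3*w^2 + e^4*w) * (e*w - e^2*w^2)) / (t*e*((1 - e*w)*(1 - e/w))) * t"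
    by (simp add: field_simps)
  also have "\<dots> = r * z - e^3 * w^3" unfolding X by (rule cancel_aux) (use E t n1 n3 in auto)
  finally show ?thesis by simp
qed

definition cv :: "real^2 \<Rightarrow> complex" where "cv y = Complex (y$1) (y$2)"
definition ci :: "complex \<Rightarrow> real^2" where "ci z = vector [Re z, Im z]"

lemma cv_ci[simp]: "cv (ci z) = z" by (simp add: cv_def ci_def complex_eq_iff)
lemma ci_cv[simp]: "ci (cv y) = y" by (simp add: cv_def ci_def vec_eq_iff forall_2)
lemma cv_add: "cv (x + y) = cv x + cv y" by (simp add: cv_def complex_eq_iff)
lemma cv_diff: "cv (x - y) = cv x - cv y" by (simp add: cv_def complex_eq_iff)
lemma cv_zero[simp]: "cv 0 = 0" by (simp add: cv_def complex_eq_iff)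
lemma ci_add: "ci (x + y) = ci x + ci y" by (simp add: ci_def vec_eq_iff forall_2)
lemma ci_diff: "ci (x - y) = ci x - ci y" by (simp add: ci_def vec_eq_iff forall_2)
lemma ci_zero[simp]: "ci 0 = 0" by (simp add: ci_def vec_eq_iff forall_2)

lemma norm_cv: "norm (cv y) = norm y"
  by (simp add: cv_def norm_vec_def L2_set_def sum_2 complex_norm)

lemma norm_ci: "norm (ci z) = norm z"
  using norm_cv[of "ci z"] by simp

lemma bl_cv: "bounded_linear cv"
  unfolding linear_conv_bounded_linear[symmetric]
  by (rule linearI) (simp_all add: cv_def complex_eq_iff scaleR_complex.ctr)

lemma bl_ci: "bounded_linear ci"
  unfolding linear_conv_bounded_linear[symmetric]
  by (rule linearI) (simp_all add: ci_def vec_eq_iff forall_2)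

lemma cv_mat: "cv (vector [vector [a, -b], vector [b, a]] *v y) = Complex a b * cv y"
  by (simp add: cv_def matrix_vector_mult_def sum_2 complex_eq_iff)

lemma inv_facts:
  fixes V :: "real^2^2"
  assumes "invertible V"
  shows "V ** matrix_inv V = mat 1" "matrix_inv V ** V = mat 1"
proof -
  have "\<exists>A'. V ** A' = mat 1 \<and> A' ** V = mat 1" using assms by (simp add: invertible_def)
  then have "V ** matrix_inv V = mat 1 \<and> matrix_inv V ** V = mat 1"
    unfolding matrix_inv_def by (rule someI_ex)
  then show "V ** matrix_inv V = mat 1" "matrix_inv V ** V = mat 1" by auto
qed

lemma transfer_to_c:
  fixes V Vi Kc K :: "real^2^2" and f :: "real^2 \<Rightarrow> real^2"
  assumes V: "V ** Vi = mat 1" "Vi ** V = mat 1"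
    and KK: "K = Vi ** Kc ** V" and Kc: "\<And>y. cv (Kc *v y) = eps * cv y"
    and G: "\<And>z. G z = cv (V *v f (xs + Vi *v ci z))"
    and sol: "is_ctrl_solution f K \<tau> x S"
  shows "csol G eps \<tau> (\<lambda>t. cv (V *v (x t - xs))) S"
proof -
  define Lf where "Lf w = cv (V *v w)" for w
  have bl: "bounded_linear Lf" unfolding Lf_def
    using bounded_linear_compose[OF bl_cv matrix_vector_mul_bounded_linear[of V]] by (simp add: o_def)
  have VVi: "V *v (Vi *v y) = y" for y by (simp add: matrix_vector_mul_assoc V)
  have ViV: "Vi *v (V *v y) = y" for y by (simp add: matrix_vector_mul_assoc V)
  have xrep: "xs + Vi *v ci (Lf (x t - xs)) = x t" for t by (simp add: Lf_def ViV)
  have Lfd: "Lf (a - b) = Lf (a - xs) - Lf (b - xs)" for a b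
    using linear_diff[OF bounded_linear.linear[OF bl], of "a - xs" "b - xs"] by simp
  show ?thesis unfolding csol_def
  proof (intro conjI ballI)
    show "continuous_on S (\<lambda>t. cv (V *v (x t - xs)))"
    proof -
      have "continuous_on S x" using sol by (simp add: is_ctrl_solution_def)
      then have "continuous_on S (\<lambda>t. x t - xs)" by (intro continuous_intros)
      from bounded_linear.continuous_on[OF bl this] show ?thesis by (simp add: Lf_def)
    qed
    fix t assume t: "t \<in> S"
    have "(x has_vector_derivative (f (x t) + ctrl_gain K \<tau> t *v (x (t - 2 * \<tau>) - x (t - \<tau>)))) (at t within S \<inter> {t..})"
      using sol t by (auto simp: is_ctrl_solution_def)
    then have "((\<lambda>t. x t - xs) has_vector_derivative (f (x t) + ctrl_gain K \<tau> t *v (x (t - 2 * \<tau>) - x (t - \<tau>)) - 0)) (at t within S \<inter> {t..})"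
      by (intro derivative_intros)
    from bounded_linear.has_vector_derivative[OF bl this]
    have D: "((\<lambda>t. Lf (x t - xs)) has_vector_derivative Lf (f (x t) + ctrl_gain K \<tau> t *v (x (t - 2 * \<tau>) - x (t - \<tau>)))) (at t within S \<inter> {t..})"
      by simp
    have "Lf (f (x t) + ctrl_gain K \<tau> t *v (x (t - 2 * \<tau>) - x (t - \<tau>)))
        = G (Lf (x t - xs)) + kap eps \<tau> t * (Lf (x (t - 2*\<tau>) - xs) - Lf (x (t - \<tau>) - xs))"
    proof -
      have g: "Lf (f (x t)) = G (Lf (x t - xs))" using G xrep[of t] by (simp add: Lf_def)
      have k: "Lf (ctrl_gain K \<tau> t *v w) = kap eps \<tau> t * Lf w" for w
      proof (cases "\<exists>k::nat. (3 * real k + 2) * \<tau> \<le> t \<and> t < (3 * real k + 3) * \<tau>")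
        case True
        then have "ctrl_gain K \<tau> t = K" "kap eps \<tau> t = eps" by (auto simp: ctrl_gain_def kap_def)
        moreover have "V *v (K *v w) = Kc *v (V *v w)"
          by (simp add: KK matrix_vector_mul_assoc[symmetric] VVi)
        ultimately show ?thesis by (simp add: Lf_def Kc)
      next
        case False
        then have "ctrl_gain K \<tau> t = 0" "kap eps \<tau> t = 0" by (auto simp: ctrl_gain_def kap_def)
        then show ?thesis by (simp add: Lf_def)
      qed
      have "Lf (f (x t) + ctrl_gain K \<tau> t *v (x (t - 2 * \<tau>) - x (t - \<tau>)))
          = Lf (f (x t)) + Lf (ctrl_gain K \<tau> t *v (x (t - 2 * \<tau>) - x (t - \<tau>)))"
        by (rule linear_add[OF bounded_linear.linear[OF bl]])
      also have "\<dots> = G (Lf (x t - xs)) + kap eps \<tau> t * Lf (x (t - 2 * \<tau>) - x (t - \<tau>))"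
        by (simp only: g k)
      also have "Lf (x (t - 2 * \<tau>) - x (t - \<tau>)) = Lf (x (t - 2*\<tau>) - xs) - Lf (x (t - \<tau>) - xs)"
        by (rule Lfd)
      finally show ?thesis .
    qed
    then show "((\<lambda>t. cv (V *v (x t - xs))) has_vector_derivative
        G (cv (V *v (x t - xs))) + kap eps \<tau> t * (cv (V *v (x (t - 2 * \<tau>) - xs)) - cv (V *v (x (t - \<tau>) - xs))))
        (at t within S \<inter> {t..})"
      using D by (simp add: Lf_def)
  qed
qed

lemma transfer_from_c:
  fixes V Vi Kc K :: "real^2^2" and f :: "real^2 \<Rightarrow> real^2"
  assumes V: "V ** Vi = mat 1" "Vi ** V = mat 1"
    and KK: "K = Vi ** Kc ** V" and Kc: "\<And>y. cv (Kc *v y) = eps * cv y"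
    and G: "\<And>z. G z = cv (V *v f (xs + Vi *v ci z))"
    and sol: "csol G eps \<tau> u S"
  shows "is_ctrl_solution f K \<tau> (\<lambda>t. xs + Vi *v ci (u t)) S"
proof -
  define Li where "Li z = Vi *v ci z" for z
  have bl: "bounded_linear Li" unfolding Li_def
    using bounded_linear_compose[OF matrix_vector_mul_bounded_linear[of Vi] bl_ci] by (simp add: o_def)
  have VVi: "V *v (Vi *v y) = y" for y by (simp add: matrix_vector_mul_assoc V)
  have ViV: "Vi *v (V *v y) = y" for y by (simp add: matrix_vector_mul_assoc V)
  show ?thesis unfolding is_ctrl_solution_def
  proof (intro conjI ballI)
    show "continuous_on S (\<lambda>t. xs + Vi *v ci (u t))"
      using bounded_linear.continuous_on[OF bl, of S u] sol
      by (auto simp: csol_def Li_def intro!: continuous_intros)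
    fix t assume t: "t \<in> S"
    have "(u has_vector_derivative (G (u t) + kap eps \<tau> t * (u (t - 2*\<tau>) - u (t - \<tau>)))) (at t within S \<inter> {t..})"
      using sol t by (auto simp: csol_def)
    from bounded_linear.has_vector_derivative[OF bl this]
    have "((\<lambda>t. xs + Li (u t)) has_vector_derivative 0 + Li (G (u t) + kap eps \<tau> t * (u (t - 2*\<tau>) - u (t - \<tau>)))) (at t within S \<inter> {t..})"
      by (intro derivative_intros)
    moreover have "Li (G (u t) + kap eps \<tau> t * (u (t - 2*\<tau>) - u (t - \<tau>)))
        = f (xs + Li (u t)) + ctrl_gain K \<tau> t *v ((xs + Li (u (t - 2*\<tau>))) - (xs + Li (u (t - \<tau>))))"
    proof -
      have g: "Li (G (u t)) = f (xs + Li (u t))" by (simp add: G Li_def ViV)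
      have k: "Li (kap eps \<tau> t * w) = ctrl_gain K \<tau> t *v Li w" for w
      proof (cases "\<exists>k::nat. (3 * real k + 2) * \<tau> \<le> t \<and> t < (3 * real k + 3) * \<tau>")
        case True
        then have "ctrl_gain K \<tau> t = K" "kap eps \<tau> t = eps" by (auto simp: ctrl_gain_def kap_def)
        moreover have "ci (eps * w) = Kc *v ci w"
        proof -
          have "eps * w = cv (Kc *v ci w)" by (simp add: Kc)
          then show ?thesis by simp
        qed
        moreover have "K *v (Vi *v ci w) = Vi *v (Kc *v ci w)"
          by (simp add: KK matrix_vector_mul_assoc[symmetric] VVi)
        ultimately show ?thesis by (simp add: Li_def)
      next
        case False
        then have "ctrl_gain K \<tau> t = 0" "kap eps \<tau> t = 0" by (auto simp: ctrl_gain_def kap_def)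
        then show ?thesis by (simp add: Li_def)
      qed
      have "(xs + Li (u (t - 2*\<tau>))) - (xs + Li (u (t - \<tau>))) = Li (u (t - 2*\<tau>) - u (t - \<tau>))"
        using linear_diff[OF bounded_linear.linear[OF bl]] by simp
      then show ?thesis using linear_add[OF bounded_linear.linear[OF bl]] g k by simp
    qed
    ultimately show "((\<lambda>t. xs + Vi *v ci (u t)) has_vector_derivative
         f (xs + Vi *v ci (u t)) + ctrl_gain K \<tau> t *v (xs + Vi *v ci (u (t - 2 * \<tau>)) - (xs + Vi *v ci (u (t - \<tau>)))))
         (at t within S \<inter> {t..})"
      by (simp add: Li_def)
  qed
qed

lemma cE_polar: "cE (Complex a b) x = of_real (exp (x*a)) * cis (x*b)"
proof -
  have "complex_of_real x * Complex a b = Complex (x*a) (x*b)" by (simp add: complex_eq_iff)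
  then show ?thesis unfolding cE_def by (simp add: exp_eq_polar)
qed

lemma mm_value:
  fixes \<mu> \<omega> \<tau> \<rho> \<theta> :: real
  assumes mu: "\<mu> > 0" and tau: "\<tau> > 0"
  defines "den \<equiv> \<tau> * exp (\<mu> * \<tau>) * (1 - 2 * exp (\<mu> * \<tau>) * cos (\<omega> * \<tau>) + exp (2 * \<mu> * \<tau>))"
  defines "\<epsilon>1 \<equiv> (\<rho> * cos (\<theta> - \<omega> * \<tau>) - \<rho> * exp (\<mu> * \<tau>) * cos (\<theta> - 2 * \<omega> * \<tau>)
                 - exp (3 * \<mu> * \<tau>) * cos (2 * \<omega> * \<tau>) + exp (4 * \<mu> * \<tau>) * cos (\<omega> * \<tau>)) / den"
  defines "\<epsilon>2 \<equiv> (\<rho> * sin (\<theta> - \<omega> * \<tau>) - \<rho> * exp (\<mu> * \<tau>) * sin (\<theta> - 2 * \<omega> * \<tau>)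
                 - exp (3 * \<mu> * \<tau>) * sin (2 * \<omega> * \<tau>) + exp (4 * \<mu> * \<tau>) * sin (\<omega> * \<tau>)) / den"
  shows "mm_c \<tau> (Complex \<mu> \<omega>) (Complex \<epsilon>1 \<epsilon>2) = of_real \<rho> * cis \<theta>"
proof -
  define E where "E = exp (\<mu> * \<tau>)"
  define w where "w = cis (\<omega> * \<tau>)"
  define z where "z = cis \<theta>"
  define e where "e = complex_of_real E"
  have E1: "E > 1" using mu tau by (simp add: E_def)
  have e2: "exp (2 * \<mu> * \<tau>) = E^2" using exp_of_nat_mult[of 2 "\<mu>*\<tau>"] by (simp add: E_def mult.assoc)
  have e3: "exp (3 * \<mu> * \<tau>) = E^3" using exp_of_nat_mult[of 3 "\<mu>*\<tau>"] by (simp add: E_def mult.assoc)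
  have e4: "exp (4 * \<mu> * \<tau>) = E^4" using exp_of_nat_mult[of 4 "\<mu>*\<tau>"] by (simp add: E_def mult.assoc)
  have w0: "w \<noteq> 0" by (simp add: w_def)
  have nw: "norm w = 1" by (simp add: w_def)
  have c1: "cE (Complex \<mu> \<omega>) \<tau> = e * w" by (simp add: cE_polar e_def E_def w_def mult.commute)
  have c2: "cE (Complex \<mu> \<omega>) (2*\<tau>) = e^2 * w^2"
  proof -
    have "cE (Complex \<mu> \<omega>) (2*\<tau>) = cE (Complex \<mu> \<omega>) \<tau> * cE (Complex \<mu> \<omega>) \<tau>" by (simp add: cE_add)
    then show ?thesis by (simp add: c1 power2_eq_square)
  qed
  have c3: "cE (Complex \<mu> \<omega>) (3*\<tau>) = e^3 * w^3"
  proof -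
    have "cE (Complex \<mu> \<omega>) (3*\<tau>) = cE (Complex \<mu> \<omega>) \<tau> * cE (Complex \<mu> \<omega>) (2*\<tau>)" by (simp add: cE_add)
    then show ?thesis by (simp add: c1 c2 power2_eq_square power3_eq_cube)
  qed
  have zw1: "cis (\<theta> - \<omega> * \<tau>) = z / w" by (simp add: z_def w_def cis_divide)
  have zw2: "cis (\<theta> - 2 * \<omega> * \<tau>) = z / w^2"
  proof -
    have "w^2 = cis (2 * \<omega> * \<tau>)" unfolding w_def by (simp add: power2_eq_square cis_mult mult.assoc)
    then show ?thesis by (simp add: z_def cis_divide)
  qed
  have w2: "cis (2 * \<omega> * \<tau>) = w^2" unfolding w_def by (simp add: power2_eq_square cis_mult mult.assoc)
  define N where "N = of_real \<rho> * z / w - of_real \<rho> * e * z / w^2 - e^3 * w^2 + e^4 * w"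
  have NC: "Complex (\<epsilon>1 * den) (\<epsilon>2 * den) = N"
  proof -
    have "N = of_real \<rho> * cis (\<theta> - \<omega> * \<tau>) - of_real \<rho> * e * cis (\<theta> - 2 * \<omega> * \<tau>) - e^3 * cis (2 * \<omega> * \<tau>) + e^4 * cis (\<omega> * \<tau>)"
      by (simp add: N_def zw1 zw2 w2 w_def)
    moreover have "den \<noteq> 0"
    proof -
      have "(1 - E)^2 \<le> 1 - 2 * E * cos (\<omega> * \<tau>) + E^2"
      proof -
        have "E * cos (\<omega> * \<tau>) \<le> E * 1" using E1 by (intro mult_left_mono) auto
        then show ?thesis by (simp add: power2_eq_square algebra_simps)
      qed
      moreover have "(1 - E)^2 > 0" using E1 by simp
      ultimately have q1: "1 - 2 * E * cos (\<omega> * \<tau>) + E^2 > 0" by linarith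
      have "den = \<tau> * E * (1 - 2 * E * cos (\<omega> * \<tau>) + E^2)" by (simp add: den_def E_def[symmetric] e2)
      then show ?thesis using tau E1 q1 by simp
    qed
    ultimately show ?thesis
      by (simp add: \<epsilon>1_def \<epsilon>2_def complex_eq_iff e_def e3 e4 E_def[symmetric] cis.sel)
  qed
  have den0: "den \<noteq> 0 \<and> Complex \<epsilon>1 \<epsilon>2 = N / of_real den"
  proof -
    have "den \<noteq> 0"
    proof -
      have "(1 - E)^2 \<le> 1 - 2 * E * cos (\<omega> * \<tau>) + E^2"
      proof -
        have "E * cos (\<omega> * \<tau>) \<le> E * 1" using E1 by (intro mult_left_mono) auto
        then show ?thesis by (simp add: power2_eq_square algebra_simps)
      qed
      moreover have "(1 - E)^2 > 0" using E1 by simp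
      ultimately have q1: "1 - 2 * E * cos (\<omega> * \<tau>) + E^2 > 0" by linarith
      have "den = \<tau> * E * (1 - 2 * E * cos (\<omega> * \<tau>) + E^2)" by (simp add: den_def E_def[symmetric] e2)
      then show ?thesis using tau E1 q1 by simp
    qed
    moreover have "Complex \<epsilon>1 \<epsilon>2 = Complex (\<epsilon>1 * den) (\<epsilon>2 * den) / of_real den"
      using calculation by (simp add: complex_eq_iff)
    ultimately show ?thesis using NC by simp
  qed
  have winv: "1 / w = cis (- (\<omega> * \<tau>))" by (simp add: w_def divide_inverse)
  have wsum: "w + 1 / w = of_real (2 * cos (\<omega> * \<tau>))" unfolding winv by (simp add: w_def complex_eq_iff)
  have dC: "of_real den = of_real \<tau> * e * ((1 - e * w) * (1 - e / w))"
  proof -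
    have "(1 - e * w) * (1 - e / w) = 1 - e * (w + 1 / w) + e^2"
      using w0 by (simp add: field_simps power2_eq_square)
    also have "\<dots> = of_real (1 - 2 * E * cos (\<omega> * \<tau>) + E^2)" by (simp add: wsum e_def)
    finally show ?thesis by (simp add: den_def E_def[symmetric] e2 e_def)
  qed
  have ne1: "1 - e * w \<noteq> 0"
  proof
    assume "1 - e * w = 0"
    then have "norm (e * w) = 1" by (metis eq_iff_diff_eq_0 norm_one)
    then show False using E1 nw by (simp add: norm_mult e_def)
  qed
  have ne2: "w - e \<noteq> 0"
  proof
    assume "w - e = 0"
    then have "norm w = norm e" by simp
    then show False using E1 nw by (simp add: e_def)
  qed
  have "mm_c \<tau> (Complex \<mu> \<omega>) (Complex \<epsilon>1 \<epsilon>2)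
      = e^3*w^3 + (N / (of_real \<tau> * e * ((1 - e * w) * (1 - e / w)))) * of_real \<tau> * (e*w - e^2*w^2)"
    using den0 dC by (simp add: mm_c_def c1 c2 c3)
  also have "\<dots> = of_real \<rho> * z"
    unfolding N_def by (rule m_identity[OF w0 _ _ ne1 ne2]) (use E1 tau in \<open>auto simp: e_def\<close>)
  finally show ?thesis by (simp add: z_def)
qed

lemma D2_c_pos: "\<tau> > 0 \<Longrightarrow> D2_c \<tau> lam eps > 0"
  by (simp add: D2_c_def D1_c_def nd_c_def add_pos_nonneg)

lemma Cb_c_pos: "\<tau> > 0 \<Longrightarrow> Cb_c \<tau> lam eps > 0"
  using D2_c_pos[of \<tau> lam eps] by (simp add: Cb_c_def D1_c_def nd_c_def add_pos_nonneg)

lemma mat_bound: "\<exists>B>0. \<forall>x. norm ((A::real^2^2) *v x) \<le> B * norm x"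
  using bounded_linear.pos_bounded[OF matrix_vector_mul_bounded_linear[of A]] by (auto simp: mult.commute)

lemma lipschitz_near:
  fixes f :: "real^2 \<Rightarrow> real^2"
  assumes U: "open U" "xs \<in> U" "continuous_on U Df" "\<forall>y\<in>U. (f has_derivative (\<lambda>h. Df y *v h)) (at y)"
  shows "\<exists>r1>0. \<exists>B>0. \<forall>y1\<in>cball xs r1. \<forall>y2\<in>cball xs r1. norm (f y1 - f y2) \<le> B * norm (y1 - y2)"
proof -
  obtain r1 where r1: "r1 > 0" "cball xs r1 \<subseteq> U" using U open_contains_cball by blast
  have "compact (Df ` cball xs r1)"
    by (intro compact_continuous_image continuous_on_subset[OF U(3) r1(2)]) auto
  then obtain M where M: "M > 0" "\<forall>x\<in>Df ` cball xs r1. norm x \<le> M"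
    using compact_imp_bounded bounded_pos by metis
  have "norm (f y1 - f y2) \<le> (real CARD(2) * real CARD(2) * M) * norm (y1 - y2)"
    if y: "y1 \<in> cball xs r1" "y2 \<in> cball xs r1" for y1 y2
  proof (rule differentiable_bound[OF convex_cball _ _ y])
    fix y assume y: "y \<in> cball xs r1"
    show "(f has_derivative (*v) (Df y)) (at y within cball xs r1)"
    proof -
      have "(f has_derivative (\<lambda>h. Df y *v h)) (at y)" using U(4) r1(2) y by auto
      then show ?thesis by (rule has_derivative_at_withinI)
    qed
    show "onorm ((*v) (Df y)) \<le> real CARD(2) * real CARD(2) * M"
    proof (rule onorm_le_matrix_component)
      fix i j
      have "\<bar>Df y $ i $ j\<bar> \<le> norm (Df y $ i)" by (rule component_le_norm_cart)
      also have "\<dots> \<le> norm (Df y)" by (rule Finite_Cartesian_Product.norm_nth_le)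
      also have "\<dots> \<le> M" using M y by auto
      finally show "\<bar>Df y $ i $ j\<bar> \<le> M" .
    qed
  qed
  then show ?thesis using r1 M by (intro exI[of _ r1] conjI exI[of _ "real CARD(2) * real CARD(2) * M"]) auto
qed

theorem mainTheorem3:
  fixes f :: "real^2 \<Rightarrow> real^2" and xs :: "real^2" and V :: "real^2^2"
    and \<mu> \<omega> \<tau> \<rho> \<theta> :: real
  assumes eq: "f xs = 0"
    and C1: "\<exists>U Df. open U \<and> xs \<in> U \<and> continuous_on U Df \<and>
               (\<forall>y\<in>U. (f has_derivative (\<lambda>h. Df y *v h)) (at y)) \<and>
               Df xs = matrix_inv V ** vector [vector [\<mu>, -\<omega>], vector [\<omega>, \<mu>]] ** V"
    and V: "invertible V"
    and mu: "\<mu> > 0" and om: "\<omega> \<noteq> 0"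
    and tau: "\<tau> > 0" and rho: "0 \<le> \<rho>" "\<rho> < 1"
    and theta: "0 \<le> \<theta>" "\<theta> < 2 * pi"
  defines "den \<equiv> \<tau> * exp (\<mu> * \<tau>) * (1 - 2 * exp (\<mu> * \<tau>) * cos (\<omega> * \<tau>) + exp (2 * \<mu> * \<tau>))"
  defines "\<epsilon>1 \<equiv> (\<rho> * cos (\<theta> - \<omega> * \<tau>) - \<rho> * exp (\<mu> * \<tau>) * cos (\<theta> - 2 * \<omega> * \<tau>)
                 - exp (3 * \<mu> * \<tau>) * cos (2 * \<omega> * \<tau>) + exp (4 * \<mu> * \<tau>) * cos (\<omega> * \<tau>)) / den"
  defines "\<epsilon>2 \<equiv> (\<rho> * sin (\<theta> - \<omega> * \<tau>) - \<rho> * exp (\<mu> * \<tau>) * sin (\<theta> - 2 * \<omega> * \<tau>)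
                 - exp (3 * \<mu> * \<tau>) * sin (2 * \<omega> * \<tau>) + exp (4 * \<mu> * \<tau>) * sin (\<omega> * \<tau>)) / den"
  defines "K \<equiv> matrix_inv V ** vector [vector [\<epsilon>1, -\<epsilon>2], vector [\<epsilon>2, \<epsilon>1]] ** V"
  shows "loc_asym_stable f K \<tau> xs"
proof -
  obtain U Df where U: "open U" "xs \<in> U" "continuous_on U Df"
    and fder: "\<forall>y\<in>U. (f has_derivative (\<lambda>h. Df y *v h)) (at y)"
    and DfA: "Df xs = matrix_inv V ** vector [vector [\<mu>, -\<omega>], vector [\<omega>, \<mu>]] ** V"
    using C1 by blast
  define Vi where "Vi = matrix_inv V"
  have VV: "V ** Vi = mat 1" "Vi ** V = mat 1" using inv_facts[OF V] by (simp_all add: Vi_def)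
  have VVi: "V *v (Vi *v y) = y" for y by (simp add: matrix_vector_mul_assoc VV)
  have ViV: "Vi *v (V *v y) = y" for y by (simp add: matrix_vector_mul_assoc VV)
  define \<Lambda> :: "real^2^2" where "\<Lambda> = vector [vector [\<mu>, -\<omega>], vector [\<omega>, \<mu>]]"
  define Kc :: "real^2^2" where "Kc = vector [vector [\<epsilon>1, -\<epsilon>2], vector [\<epsilon>2, \<epsilon>1]]"
  define lam where "lam = Complex \<mu> \<omega>"
  define eps where "eps = Complex \<epsilon>1 \<epsilon>2"
  have Kc_cv: "cv (Kc *v y) = eps * cv y" for y by (simp add: Kc_def eps_def cv_mat)
  have L_cv: "cv (\<Lambda> *v y) = lam * cv y" for y by (simp add: \<Lambda>_def lam_def cv_mat)
  have KK: "K = Vi ** Kc ** V" by (simp add: K_def Vi_def Kc_def)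
  define G where "G z = cv (V *v f (xs + Vi *v ci z))" for z
  obtain nV where nV: "nV > 0" "\<And>x. norm (V *v x) \<le> nV * norm x" using mat_bound by blast
  obtain nVi where nVi: "nVi > 0" "\<And>x. norm (Vi *v x) \<le> nVi * norm x" using mat_bound by blast
  have region: "\<exists>r>0. \<forall>z. norm z \<le> r \<longrightarrow> norm (G z - lam * z) \<le> \<eta> * norm z" if \<eta>: "\<eta> > 0" for \<eta>
  proof -
    have "(f has_derivative (\<lambda>h. Df xs *v h)) (at xs)" using fder U by auto
    then have "\<forall>e>0. \<exists>d>0. \<forall>y. norm (y - xs) < d \<longrightarrow> norm (f y - f xs - Df xs *v (y - xs)) \<le> e * norm (y - xs)"
      unfolding has_derivative_at_alt by blast
    moreover have "\<eta> / (nV * nVi) > 0" using \<eta> nV nVi by simp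
    ultimately obtain d where d: "d > 0"
      "\<And>y. norm (y - xs) < d \<Longrightarrow> norm (f y - f xs - Df xs *v (y - xs)) \<le> (\<eta> / (nV * nVi)) * norm (y - xs)"
      by blast
    show ?thesis
    proof (intro exI[of _ "d / (2 * nVi)"] conjI allI impI)
      show "d / (2 * nVi) > 0" using d nVi by simp
      fix z :: complex assume z: "norm z \<le> d / (2 * nVi)"
      define y where "y = xs + Vi *v ci z"
      have ny: "norm (y - xs) \<le> nVi * norm z" using nVi(2)[of "ci z"] by (simp add: y_def norm_ci)
      also have "\<dots> \<le> nVi * (d / (2 * nVi))" using z nVi by (intro mult_left_mono) auto
      also have "\<dots> < d" using d nVi by simp
      finally have yd: "norm (y - xs) < d" .
      have lin: "cv (V *v (Df xs *v (y - xs))) = lam * z"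
      proof -
        have "V *v (Df xs *v (y - xs)) = \<Lambda> *v ci z"
          by (simp add: DfA y_def \<Lambda>_def Vi_def[symmetric] matrix_vector_mul_assoc[symmetric] VVi)
        then show ?thesis by (simp add: L_cv)
      qed
      have "cv (V *v (f y - Df xs *v (y - xs))) = cv (V *v f y) - cv (V *v (Df xs *v (y - xs)))"
        by (simp only: matrix_vector_mult_diff_distrib cv_diff)
      moreover have "G z = cv (V *v f y)" by (simp add: G_def y_def)
      ultimately have "G z - lam * z = cv (V *v (f y - f xs - Df xs *v (y - xs)))"
        by (simp add: eq lin)
      then have "norm (G z - lam * z) = norm (V *v (f y - f xs - Df xs *v (y - xs)))" by (simp add: norm_cv)
      also have "\<dots> \<le> nV * norm (f y - f xs - Df xs *v (y - xs))" by (rule nV(2))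
      also have "\<dots> \<le> nV * ((\<eta> / (nV * nVi)) * norm (y - xs))" using d(2)[OF yd] nV by (intro mult_left_mono) auto
      also have "\<dots> \<le> nV * ((\<eta> / (nV * nVi)) * (nVi * norm z))"
        using ny nV nVi \<eta> by (intro mult_left_mono) auto
      also have "\<dots> = \<eta> * norm z" using nV nVi by (simp add: field_simps)
      finally show "norm (G z - lam * z) \<le> \<eta> * norm z" .
    qed
  qed
  obtain r1 B where r1: "r1 > 0" "B > 0"
    and flip: "\<And>y1 y2. y1 \<in> cball xs r1 \<Longrightarrow> y2 \<in> cball xs r1 \<Longrightarrow> norm (f y1 - f y2) \<le> B * norm (y1 - y2)"
    using lipschitz_near[OF U fder] by blast
  define r2 where "r2 = r1 / nVi"
  have r2: "r2 > 0" using r1 nVi by (simp add: r2_def)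
  define LG where "LG = nV * B * nVi"
  have LG: "LG > 0" using nV nVi r1 by (simp add: LG_def)
  have Glip: "norm (G z1 - G z2) \<le> LG * norm (z1 - z2)" if z: "norm z1 \<le> r2" "norm z2 \<le> r2" for z1 z2
  proof -
    define y1 where "y1 = xs + Vi *v ci z1"
    define y2 where "y2 = xs + Vi *v ci z2"
    have yc: "y1 \<in> cball xs r1" "y2 \<in> cball xs r1"
    proof -
      have "norm (Vi *v ci z1) \<le> nVi * norm z1" using nVi(2)[of "ci z1"] by (simp add: norm_ci)
      also have "\<dots> \<le> nVi * r2" using z nVi by (intro mult_left_mono) auto
      also have "\<dots> = r1" using nVi by (simp add: r2_def)
      finally show "y1 \<in> cball xs r1" by (simp add: y1_def dist_norm)
      have "norm (Vi *v ci z2) \<le> nVi * norm z2" using nVi(2)[of "ci z2"] by (simp add: norm_ci)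
      also have "\<dots> \<le> nVi * r2" using z nVi by (intro mult_left_mono) auto
      also have "\<dots> = r1" using nVi by (simp add: r2_def)
      finally show "y2 \<in> cball xs r1" by (simp add: y2_def dist_norm)
    qed
    have "G z1 - G z2 = cv (V *v (f y1 - f y2))"
      by (simp add: G_def y1_def y2_def matrix_vector_mult_diff_distrib cv_diff)
    then have "norm (G z1 - G z2) = norm (V *v (f y1 - f y2))" by (simp add: norm_cv)
    also have "\<dots> \<le> nV * norm (f y1 - f y2)" by (rule nV(2))
    also have "\<dots> \<le> nV * (B * norm (y1 - y2))" using flip[OF yc] nV by (intro mult_left_mono) auto
    also have "y1 - y2 = Vi *v ci (z1 - z2)" by (simp add: y1_def y2_def ci_diff matrix_vector_mult_diff_distrib)
    also have "nV * (B * norm (Vi *v ci (z1 - z2))) \<le> nV * (B * (nVi * norm (z1 - z2)))"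
      using nVi(2)[of "ci (z1 - z2)"] nV r1 by (intro mult_left_mono) (auto simp: norm_ci)
    also have "\<dots> = LG * norm (z1 - z2)" by (simp add: LG_def)
    finally show ?thesis .
  qed
  define cp where "cp z = closest_point (cball 0 r2) z" for z :: complex
  have cp_in: "norm (cp z) \<le> r2" for z
    using closest_point_in_set[of "cball (0::complex) r2" z] r2 by (simp add: cp_def)
  have cp_lip: "norm (cp z1 - cp z2) \<le> norm (z1 - z2)" for z1 z2
    using closest_point_lipschitz[of "cball (0::complex) r2" z1 z2] r2 by (simp add: cp_def dist_norm)
  have cp_self: "norm z \<le> r2 \<Longrightarrow> cp z = z" for z
    using closest_point_self[of z "cball (0::complex) r2"] by (simp add: cp_def)
  define Gt where "Gt z = G (cp z)" for z
  have Gtlip: "norm (Gt z1 - Gt z2) \<le> LG * norm (z1 - z2)" for z1 z2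
  proof -
    have "norm (Gt z1 - Gt z2) \<le> LG * norm (cp z1 - cp z2)" unfolding Gt_def by (rule Glip[OF cp_in cp_in])
    also have "\<dots> \<le> LG * norm (z1 - z2)" using cp_lip LG by (intro mult_left_mono) auto
    finally show ?thesis .
  qed
  have Gt_eq: "norm z \<le> r2 \<Longrightarrow> Gt z = G z" for z by (simp add: Gt_def cp_self)
  define D2v where "D2v = D2_c \<tau> lam eps"
  define Cbv where "Cbv = Cb_c \<tau> lam eps"
  have D2v: "D2v > 0" using D2_c_pos[OF tau] by (simp add: D2v_def)
  have Cbv: "Cbv > 0" using Cb_c_pos[OF tau] by (simp add: Cbv_def)
  have Relam: "Re lam = \<mu>" by (simp add: lam_def)
  define \<eta>0 where "\<eta>0 = min 1 ((1 - \<rho>) / (2 * exp (3*\<tau>*\<mu>) * D2v))"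
  have \<eta>0: "\<eta>0 > 0" "\<eta>0 \<le> 1" using rho D2v by (auto simp: \<eta>0_def)
  obtain r0 where r0: "r0 > 0" "\<And>z. norm z \<le> r0 \<Longrightarrow> norm (G z - lam * z) \<le> \<eta>0 * norm z"
    using region[OF \<eta>0(1)] by blast
  define r where "r = min r0 r2"
  have r: "r > 0" using r0 r2 by (simp add: r_def)
  interpret cG: core \<tau> lam eps G \<eta>0 r
    by unfold_locales (use tau mu \<eta>0 r r0 in \<open>auto simp: Relam r_def\<close>)
  interpret cT: core \<tau> lam eps Gt \<eta>0 r
  proof unfold_locales
    fix z :: complex assume "norm z \<le> r"
    then show "norm (Gt z - lam * z) \<le> \<eta>0 * norm z" using Gt_eq r0 by (simp add: r_def)
  qed (use tau mu \<eta>0 r in \<open>auto simp: Relam\<close>)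
  have mmv: "mm_c \<tau> lam eps = of_real \<rho> * cis \<theta>"
    unfolding lam_def eps_def \<epsilon>1_def \<epsilon>2_def den_def by (rule mm_value[OF mu tau])
  define q where "q = (1 + \<rho>) / 2"
  have q: "0 \<le> q" "q < 1" using rho by (auto simp: q_def)
  have qc: "norm (mm_c \<tau> lam eps) + exp (3*\<tau>*Re lam) * \<eta>0 * D2_c \<tau> lam eps \<le> q"
  proof -
    have "exp (3*\<tau>*\<mu>) * \<eta>0 * D2v \<le> exp (3*\<tau>*\<mu>) * ((1 - \<rho>) / (2 * exp (3*\<tau>*\<mu>) * D2v)) * D2v"
      using D2v by (intro mult_right_mono mult_left_mono) (auto simp: \<eta>0_def)
    also have "\<dots> = (1 - \<rho>) / 2" using D2v by (simp add: field_simps)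
    finally show ?thesis using rho by (simp add: mmv Relam norm_mult D2v_def q_def)
  qed
  have Sint0: "\<And>t. t \<in> {(0::real)..} \<Longrightarrow> {0..t} \<subseteq> {0..}" by auto
  have St0: "\<And>t. t \<in> {(0::real)..} \<Longrightarrow> 0 \<le> t" by auto
  define P where "P x0 = cv (V *v (x0 - xs))" for x0
  have Pn: "norm (P x0) \<le> nV * norm (x0 - xs)" for x0 using nV(2)[of "x0 - xs"] by (simp add: P_def norm_cv)
  have xback: "xs + Vi *v ci (P x0) = x0" for x0 by (simp add: P_def ViV)
  have xb: "norm ((xs + Vi *v ci z) - xs) \<le> nVi * norm z" for z using nVi(2)[of "ci z"] by (simp add: norm_ci)
  have csolG: "csol G eps \<tau> u S" if "csol Gt eps \<tau> u S" "\<And>t. t \<in> S \<Longrightarrow> norm (u t) \<le> r2" for u S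
    using that unfolding csol_def by (simp add: Gt_eq)
  have small_imp: "norm (P x0) \<le> r / (2*Cbv)" if "norm (x0 - xs) < r / (2*Cbv*nV)" for x0
  proof -
    have "nV * norm (x0 - xs) \<le> nV * (r / (2*Cbv*nV))" using that nV by (intro mult_left_mono) auto
    also have "\<dots> = r / (2*Cbv)" using nV by (simp add: field_simps)
    finally show ?thesis using Pn[of x0] by linarith
  qed
  show ?thesis unfolding loc_asym_stable_def
  proof (intro conjI allI impI)
    fix \<eta>s :: real assume \<eta>s: "\<eta>s > 0"
    define \<delta> where "\<delta> = min (r / (2*Cbv*nV)) (\<eta>s / (2*Cbv*nV*nVi))"
    have \<delta>: "\<delta> > 0" using r Cbv nV nVi \<eta>s by (simp add: \<delta>_def)
    show "\<exists>\<delta>>0. \<forall>x0. norm (x0 - xs) < \<delta> \<longrightarrow>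
        (\<exists>x. is_ctrl_solution f K \<tau> x {0..} \<and> x 0 = x0) \<and>
        (\<forall>T x. T > 0 \<and> is_ctrl_solution f K \<tau> x {0..<T} \<and> x 0 = x0 \<longrightarrow> (\<forall>t\<in>{0..<T}. norm (x t - xs) < \<eta>s))"
    proof (intro exI[of _ \<delta>] conjI allI impI \<delta>)
      fix x0 assume x0: "norm (x0 - xs) < \<delta>"
      have sm: "norm (P x0) \<le> r / (2*Cbv)" using x0 by (intro small_imp) (simp add: \<delta>_def)
      have se: "nVi * (Cbv * norm (P x0)) < \<eta>s"
      proof -
        have "Cbv * nVi * norm (P x0) \<le> Cbv * nVi * (nV * norm (x0 - xs))"
          using Pn Cbv nVi by (intro mult_left_mono) auto
        also have "\<dots> < Cbv * nVi * (nV * (\<eta>s / (2*Cbv*nV*nVi)))"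
          using x0 Cbv nVi nV by (intro mult_strict_left_mono) (auto simp: \<delta>_def)
        also have "\<dots> = \<eta>s / 2" using Cbv nVi nV by (simp add: field_simps)
        finally show ?thesis using \<eta>s by (simp add: algebra_simps)
      qed
      show "\<exists>x. is_ctrl_solution f K \<tau> x {0..} \<and> x 0 = x0"
      proof -
        obtain u where u: "csol Gt eps \<tau> u {0..}" "u 0 = P x0"
          using exists_global[OF LG Gtlip tau] by blast
        have ub: "norm (u t) \<le> r2" if "t \<in> {0..}" for t
        proof -
          have "norm (u t) \<le> Cbv * norm (u 0)"
            using cT.bounded_sol[OF u(1) Sint0 St0 q qc _ that] sm u(2) by (simp add: Cbv_def)
          also have "\<dots> \<le> Cbv * (r / (2*Cbv))" using sm u(2) Cbv by (intro mult_left_mono) auto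
          also have "\<dots> \<le> r2" using Cbv r r2 by (simp add: r_def min_def)
          finally show ?thesis .
        qed
        have "csol G eps \<tau> u {0..}" by (rule csolG[OF u(1) ub])
        then have "is_ctrl_solution f K \<tau> (\<lambda>t. xs + Vi *v ci (u t)) {0..}"
          by (rule transfer_from_c[where f=f and G=G and V=V and Vi=Vi and Kc=Kc and K=K and xs=xs and eps=eps, OF VV KK Kc_cv G_def])
        then show ?thesis using u(2) xback by auto
      qed
      show "\<forall>t\<in>{0..<T}. norm (x t - xs) < \<eta>s"
        if "T > 0 \<and> is_ctrl_solution f K \<tau> x {0..<T} \<and> x 0 = x0" for T x
      proof
        fix t assume t: "t \<in> {0..<T}"
        have sol: "is_ctrl_solution f K \<tau> x {0..<T}" "x 0 = x0" using that by auto
        define u where "u t = cv (V *v (x t - xs))" for t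
        have cu: "csol G eps \<tau> u {0..<T}" unfolding u_def by (rule transfer_to_c[where f=f and G=G and V=V and Vi=Vi and Kc=Kc and K=K and xs=xs and eps=eps, OF VV KK Kc_cv G_def sol(1)])
        have u0: "u 0 = P x0" by (simp add: u_def P_def sol(2))
        have "norm (u t) \<le> Cbv * norm (u 0)"
        proof -
          have SintT: "\<And>s. s \<in> {0..<T} \<Longrightarrow> {0..s} \<subseteq> {0..<T}" by auto
          have StT: "\<And>s. s \<in> {0..<T} \<Longrightarrow> 0 \<le> s" by auto
          show ?thesis using cG.bounded_sol[OF cu SintT StT q qc _ t] sm u0 by (simp add: Cbv_def)
        qed
        moreover have "x t = xs + Vi *v ci (u t)" by (simp add: u_def ViV)
        ultimately have "norm (x t - xs) \<le> nVi * (Cbv * norm (u 0))"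
          using xb[of "u t"] nVi by (smt (verit) mult_left_mono)
        then show "norm (x t - xs) < \<eta>s" using se u0 by simp
      qed
    qed
  next
    show "\<exists>\<delta>0>0. \<forall>x. is_ctrl_solution f K \<tau> x {0..} \<and> norm (x 0 - xs) < \<delta>0 \<longrightarrow> (x \<longlongrightarrow> xs) at_top"
    proof (intro exI[of _ "r / (2*Cbv*nV)"] conjI allI impI)
      show "r / (2*Cbv*nV) > 0" using r Cbv nV by simp
      fix x assume x: "is_ctrl_solution f K \<tau> x {0..} \<and> norm (x 0 - xs) < r / (2*Cbv*nV)"
      define u where "u t = cv (V *v (x t - xs))" for t
      have cu: "csol G eps \<tau> u {0..}" unfolding u_def by (rule transfer_to_c[where f=f and G=G and V=V and Vi=Vi and Kc=Kc and K=K and xs=xs and eps=eps, OF VV KK Kc_cv G_def]) (use x in auto)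
      have u0: "norm (u 0) \<le> r / (2*Cbv)" using small_imp[of "x 0"] x by (simp add: u_def P_def)
      have "(u \<longlongrightarrow> 0) at_top" by (rule cG.conv_sol[OF cu q qc]) (use u0 in \<open>simp add: Cbv_def\<close>)
      then have "((\<lambda>t. xs + Vi *v ci (u t)) \<longlongrightarrow> xs + Vi *v ci 0) at_top"
        by (intro tendsto_intros bounded_linear.tendsto[OF matrix_vector_mul_bounded_linear]
              bounded_linear.tendsto[OF bl_ci])
      moreover have "(\<lambda>t. xs + Vi *v ci (u t)) = x" by (simp add: u_def ViV)
      ultimately show "(x \<longlongrightarrow> xs) at_top" by simp
    qed
  qed
qed

end
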